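(* Let $\alpha=(\alpha_1,\dots,\alpha_\ell)$ be a composition. The antipode $\mathcal{S}$ of $\mathrm{QSym}$ acts on the shuffle basis by $$\mathcal{S}(S_\alpha)=(-1)^{\ell}S_{(\alpha_\ell,\dots,\alpha_1)}.$$
   Context: $\mathrm{QSym}$ is the Hopf algebra of quasisymmetric functions with monomial basis $M_\alpha$, product given by quasi-shuffle of compositions and coproduct $\Delta(M_\alpha)=\sum_{\beta\gamma=\alpha}M_\beta\otimes M_\gamma$ (deconcatenation). For a composition $\alpha=(\alpha_1,\dots,\alpha_\ell)$, $\mathrm{OtE}(\alpha)=\{i:\alpha_i\text{ odd},\alpha_{i+1}\text{ even}\}$; if $\mathrm{OtE}(\alpha)=\{i_1<\dots<i_k\}$ then $m_o(\alpha)=(\alpha_1+\cdots+\alpha_{i_1},\alpha_{i_1+1}+\cdots+\alpha_{i_2},\dots,\alpha_{i_k+1}+\cdots+\alpha_\ell)$. For $m_o(\alpha)\le\beta\le\alpha$ (refinement order), each part $\beta_i$ is a sum of a consecutive block of parts of $\alpha$; with $\mathrm{O}_\alpha^\beta(i)$, $\mathrm{E}_\alpha^\beta(i)$ the numbers of odd and even parts in that block, $c_\alpha^\beta=\prod_i \frac{1}{\mathrm{O}_\alpha^\beta(i)!\,\mathrm{E}_\alpha^\beta(i)!}$. The shuffle basis is $S_\alpha=\sum_{m_o(\alpha)\le\beta\le\alpha}c_\alpha^\beta M_\beta$. It satisfies $S_\alpha\cdot S_\beta=\sum_{\gamma}S_\gamma$, the sum over the multiset of all shuffles $\gamma$ of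 the sequences $\alpha$ and $\beta$ (interleavings preserving the relative order of parts of each), and $\Delta(S_\alpha)=\sum_{\beta\gamma=\alpha}S_\beta\otimes S_\gamma$; hence $\mathrm{QSym}$ is a shuffle algebra in this basis. *)

theory Defs
  imports Complex_Main
begin

definition is_comp :: "nat list \<Rightarrow> bool" where
  "is_comp a \<longleftrightarrow> (\<forall>x\<in>set a. 0 < x)"

definition comps :: "nat \<Rightarrow> nat list set" where
  "comps n = {a. is_comp a \<and> sum_list a = n}"

text \<open>Elements of QSym (graded completion): coefficient functions w.r.t. the
  monomial basis, indexed by compositions.\<close>
type_synonym qsym = "nat list \<Rightarrow> rat"

definition Mb :: "nat list \<Rightarrow> qsym" where
  "Mb a = (\<lambda>g. if g = a then 1 else 0)"

text \<open>Quasi-shuffle of two compositions, as a list (multiset) of compositions.\<close>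
fun qsh :: "nat list \<Rightarrow> nat list \<Rightarrow> nat list list" where
  "qsh [] b = [b]"
| "qsh a [] = [a]"
| "qsh (x # a) (y # b) =
     map ((#) x) (qsh a (y # b)) @ map ((#) y) (qsh (x # a) b) @ map ((#) (x + y)) (qsh a b)"

text \<open>Product of QSym: bilinear extension of M_a * M_b = sum over quasi-shuffles.\<close>
definition qmult :: "qsym \<Rightarrow> qsym \<Rightarrow> qsym" where
  "qmult f g = (\<lambda>c. \<Sum>(a, b) \<in> {(a, b). is_comp a \<and> is_comp b \<and> sum_list a + sum_list b = sum_list c}.
                      f a * g b * of_nat (count_list (qsh a b) c))"

text \<open>Antipode on the monomial basis, determined by the antipode axiom
  m (S \<otimes> id) \<Delta> = \<eta> \<epsilon> with deconcatenation coproduct: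
  sum over a = b c of S(M_b) M_c equals M_[] if a = [] and 0 otherwise.\<close>
function antM :: "nat list \<Rightarrow> qsym" where
  "antM a = (if a = [] then Mb []
             else (\<lambda>c. - (\<Sum>i<length a. qmult (antM (take i a)) (Mb (drop i a)) c)))"
  by auto
termination by (relation "measure length") auto

text \<open>Linear extension of the antipode (it preserves degree).\<close>
definition antipode :: "qsym \<Rightarrow> qsym" where
  "antipode f = (\<lambda>c. \<Sum>a \<in> comps (sum_list c). f a * antM a c)"

text \<open>Interior partial sums; refinement order: qleq b a (b \<le> a) iff a refines b.\<close>
definition psums :: "nat list \<Rightarrow> nat set" where
  "psums a = {sum_list (take i a) | i. 0 < i \<and> i < length a}"

definition qleq :: "nat list \<Rightarrow> nat list \<Rightarrow> bool" where
  "qleq b a \<longleftrightarrow> is_comp a \<and> is_comp b \<and> sum_list b = sum_list a \<and> psums b \<subseteq> psums a"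

definition OtE :: "nat list \<Rightarrow> nat set" where
  "OtE a = {i. 1 \<le> i \<and> i < length a \<and> odd (a ! (i - 1)) \<and> even (a ! i)}"

definition m_o :: "nat list \<Rightarrow> nat list" where
  "m_o a = (if a = [] then [] else let ks = sorted_list_of_set (OtE a); cuts = 0 # ks @ [length a] in
            map (\<lambda>j. sum_list (take (cuts ! (j + 1) - cuts ! j) (drop (cuts ! j) a)))
                [0..<length ks + 1])"

text \<open>Blocks of a corresponding to the parts of a coarsening b.\<close>
fun blk :: "nat list \<Rightarrow> nat list \<Rightarrow> nat list list" where
  "blk a [] = []"
| "blk a (x # bs) = (let k = (LEAST k. sum_list (take k a) = x) in take k a # blk (drop k a) bs)"

definition cc :: "nat list \<Rightarrow> nat list \<Rightarrow> rat" where
  "cc a b = prod_list (map (\<lambda>B. 1 / (of_nat (fact (length (filter odd B)))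
                                   * of_nat (fact (length (filter even B))))) (blk a b))"

definition Sb :: "nat list \<Rightarrow> qsym" where
  "Sb a = (\<lambda>b. if qleq (m_o a) b \<and> qleq b a then cc a b else 0)"

end

theory Submission
  imports Defs
begin


fun lparts :: "'a list \<Rightarrow> 'a list list list" where
  "lparts [] = [[]]"
| "lparts (y # r) = map (\<lambda>p. [y] # p) (lparts r) @
     map (\<lambda>p. (y # hd p) # tl p) (filter (\<lambda>p. p \<noteq> []) (lparts r))"

definition SP :: "'a list \<Rightarrow> ('a list list \<Rightarrow> 'b::comm_ring_1) \<Rightarrow> 'b" where
  "SP x F = sum_list (map F (lparts x))"

lemma lparts_sound: "P \<in> set (lparts x) \<Longrightarrow> concat P = x \<and> [] \<notin> set P"
proof (induction x arbitrary: P)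
  case Nil then show ?case by simp
next
  case (Cons y r)
  then show ?case
  proof (cases "P \<in> (\<lambda>p. [y] # p) ` set (lparts r)")
    case True then show ?thesis using Cons.IH by auto
  next
    case False
    then obtain p where p: "p \<in> set (lparts r)" "p \<noteq> []" "P = (y # hd p) # tl p"
      using Cons.prems by auto
    have "concat p = r" "[] \<notin> set p" using Cons.IH[OF p(1)] by auto
    then show ?thesis using p(2,3) by (cases p) auto
  qed
qed

lemma lparts_complete: "concat P = x \<Longrightarrow> [] \<notin> set P \<Longrightarrow> P \<in> set (lparts x)"
proof (induction x arbitrary: P)
  case Nil then show ?case by (cases P) auto
next
  case (Cons y r)
  obtain B P' where P: "P = B # P'" using Cons.prems by (cases P) auto
  with Cons.prems obtain B' where B: "B = y # B'" by (cases B) auto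
  show ?case
  proof (cases "B' = []")
    case True
    then have "P' \<in> set (lparts r)" using Cons P B by auto
    then show ?thesis using P B True by auto
  next
    case False
    then have "B' # P' \<in> set (lparts r)" using Cons P B by auto
    then show ?thesis using P B by (auto intro!: image_eqI[where x="B' # P'"])
  qed
qed

lemma lparts_set: "set (lparts x) = {P. concat P = x \<and> [] \<notin> set P}"
  using lparts_sound lparts_complete by blast

lemma lparts_distinct: "distinct (lparts x)"
proof (induction x)
  case Nil then show ?case by simp
next
  case (Cons y r)
  have d1: "distinct (map (\<lambda>p. [y] # p) (lparts r))"
    using Cons by (simp add: distinct_map inj_on_def)
  have "inj_on (\<lambda>p. (y # hd p) # tl p) (set (filter (\<lambda>p. p \<noteq> []) (lparts r)))"
    unfolding inj_on_def
  proof (intro ballI impI)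
    fix p q assume "p \<in> set (filter (\<lambda>p. p \<noteq> []) (lparts r))" "q \<in> set (filter (\<lambda>p. p \<noteq> []) (lparts r))"
      and e: "(y # hd p) # tl p = (y # hd q) # tl q"
    then have "p \<noteq> []" "q \<noteq> []" by auto
    then show "p = q" using e by (metis list.collapse list.inject)
  qed
  then have d2: "distinct (map (\<lambda>p. (y # hd p) # tl p) (filter (\<lambda>p. p \<noteq> []) (lparts r)))"
    using Cons by (simp add: distinct_map)
  have d3: "set (map (\<lambda>p. [y] # p) (lparts r)) \<inter> set (map (\<lambda>p. (y # hd p) # tl p) (filter (\<lambda>p. p \<noteq> []) (lparts r))) = {}"
  proof (rule ccontr)
    assume "\<not> ?thesis"
    then obtain p q where "p \<in> set (lparts r)" "q \<in> set (lparts r)" "q \<noteq> []" "[y] # p = (y # hd q) # tl q"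
      by auto
    then have "hd q = []" by auto
    moreover have "hd q \<in> set q" using \<open>q \<noteq> []\<close> by simp
    ultimately have "[] \<in> set q" by simp
    then show False using lparts_sound[of q r] \<open>q \<in> set (lparts r)\<close> by blast
  qed
  show ?case using d1 d2 d3 by simp
qed

lemma SP_Nil[simp]: "SP [] F = F []"
  by (simp add: SP_def)

lemma sum_list_map_filter_if: "sum_list (map f (filter P xs)) = sum_list (map (\<lambda>x. if P x then f x else 0) xs)"
  by (induction xs) auto

lemma sum_list_map_filter_ne: "sum_list (map f (filter (\<lambda>p. p \<noteq> []) xs)) = sum_list (map (\<lambda>p. if p = [] then 0 else f p) xs)"
  by (induction xs) auto

lemma SP_Cons: "SP (y # r) F = SP r (\<lambda>p. F ([y] # p) + (if p = [] then 0 else F ((y # hd p) # tl p)))"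
  by (simp add: SP_def sum_list_map_filter_ne sum_list_addf o_def)

lemma SP_add: "SP x (\<lambda>p. F p + G p) = SP x F + SP x G"
  by (simp add: SP_def sum_list_addf)

lemma SP_mult: "SP x (\<lambda>p. c * F p) = c * SP x F"
  by (simp add: SP_def sum_list_const_mult)

lemma SP_mult_right: "SP x (\<lambda>p. F p * c) = SP x F * c"
  by (simp add: SP_def sum_list_mult_const)

lemma SP_cong: "(\<And>p. concat p = x \<Longrightarrow> [] \<notin> set p \<Longrightarrow> F p = G p) \<Longrightarrow> SP x F = SP x G"
  unfolding SP_def by (rule arg_cong[where f=sum_list], rule map_cong) (auto dest: lparts_sound)

lemma SP_zero: "(\<And>p. concat p = x \<Longrightarrow> [] \<notin> set p \<Longrightarrow> F p = 0) \<Longrightarrow> SP x F = 0"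
proof -
  assume "\<And>p. concat p = x \<Longrightarrow> [] \<notin> set p \<Longrightarrow> F p = 0"
  then have "SP x F = SP x (\<lambda>p. 0)" by (rule SP_cong)
  then show ?thesis by (simp add: SP_def)
qed

lemma SP_single: "SP [y] F = F [[y]]"
  by (simp add: SP_Cons)

lemma SP_sum_set: "SP x F = (\<Sum>P \<in> {P. concat P = x \<and> [] \<notin> set P}. F P)"
  unfolding SP_def using lparts_distinct[of x] lparts_set[of x]
  by (metis sum_list_distinct_conv_sum_set)

lemma sum_SP_swap: "(\<Sum>a\<in>A. SP x (h a)) = SP x (\<lambda>p. \<Sum>a\<in>A. h a p)"
proof -
  have "\<And>L. (\<Sum>a\<in>A. sum_list (map (h a) L)) = sum_list (map (\<lambda>p. \<Sum>a\<in>A. h a p) L)"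
    subgoal for L by (induction L) (auto simp: sum.distrib)
    done
  then show ?thesis unfolding SP_def .
qed



definition mrg :: "'a list list \<Rightarrow> 'a list list \<Rightarrow> 'a list list" where
  "mrg P Q = butlast P @ (last P @ hd Q) # tl Q"

lemma mrg_ne[simp]: "mrg P Q \<noteq> []"
  by (simp add: mrg_def)

lemma junction_pt:
  fixes F :: "'a list list \<Rightarrow> 'b::comm_ring_1"
  assumes "P \<noteq> []" "Q \<noteq> []"
  shows "(F ([x] # (P @ Q)) + F ((x # hd (P @ Q)) # tl (P @ Q))) + (F ([x] # mrg P Q) + F ((x # hd (mrg P Q)) # tl (mrg P Q)))
   = (F (([x] # P) @ Q) + F (mrg ([x] # P) Q)) + (F (((x # hd P) # tl P) @ Q) + F (mrg ((x # hd P) # tl P) Q))"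
proof -
  obtain B P' where BP: "P = B # P'" using assms by (cases P) auto
  show ?thesis
  proof (cases "P' = []")
    case True
    then show ?thesis using BP assms by (simp add: mrg_def)
  next
    case False
    then show ?thesis using BP assms by (simp add: mrg_def)
  qed
qed

lemma SP_append:
  assumes "xs \<noteq> []" "ys \<noteq> []"
  shows "SP (xs @ ys) F = SP xs (\<lambda>P. SP ys (\<lambda>Q. F (P @ Q) + F (mrg P Q)))"
  using assms(1)
proof (induction xs arbitrary: F rule: list_nonempty_induct)
  case (single x)
  show ?case
    by (simp add: SP_Cons SP_single mrg_def) (rule SP_cong, use assms(2) in auto)
next
  case (cons x xs)
  define F' where "F' = (\<lambda>p. F ([x] # p) + (if p = [] then 0 else F ((x # hd p) # tl p)))"
  have "SP ((x # xs) @ ys) F = SP (xs @ ys) F'"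
    by (simp add: SP_Cons F'_def)
  also have "\<dots> = SP xs (\<lambda>P. SP ys (\<lambda>Q. F' (P @ Q) + F' (mrg P Q)))"
    by (rule cons.IH)
  also have "\<dots> = SP (x # xs) (\<lambda>P. SP ys (\<lambda>Q. F (P @ Q) + F (mrg P Q)))"
    unfolding SP_Cons
  proof (rule SP_cong)
    fix P :: "'a list list" assume P: "concat P = xs" "[] \<notin> set P"
    then have Pne: "P \<noteq> []" using cons.hyps by auto
    have "SP ys (\<lambda>Q. F' (P @ Q) + F' (mrg P Q)) =
      SP ys (\<lambda>Q. (F (([x] # P) @ Q) + F (mrg ([x] # P) Q)) + (F (((x # hd P) # tl P) @ Q) + F (mrg ((x # hd P) # tl P) Q)))"
    proof (rule SP_cong)
      fix Q :: "'a list list" assume "concat Q = ys" "[] \<notin> set Q"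
      then have "Q \<noteq> []" using assms(2) by auto
      then show "F' (P @ Q) + F' (mrg P Q) =
        (F (([x] # P) @ Q) + F (mrg ([x] # P) Q)) + (F (((x # hd P) # tl P) @ Q) + F (mrg ((x # hd P) # tl P) Q))"
        unfolding F'_def using junction_pt[OF Pne, of Q F x] Pne by simp
    qed
    then show "SP ys (\<lambda>Q. F' (P @ Q) + F' (mrg P Q)) =
      SP ys (\<lambda>Q. F (([x] # P) @ Q) + F (mrg ([x] # P) Q)) +
      (if P = [] then 0 else SP ys (\<lambda>Q. F (((x # hd P) # tl P) @ Q) + F (mrg ((x # hd P) # tl P) Q)))"
      using Pne by (simp add: SP_add)
  qed
  finally show ?case .
qed

lemma SP_first_block:
  assumes "B \<noteq> []"
  shows "SP B F = (\<Sum>k = 1..length B. SP (drop k B) (\<lambda>p. F (take k B # p)))"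
  using assms
proof (induction B arbitrary: F rule: list_nonempty_induct)
  case (single x)
  then show ?case by (simp add: SP_single)
next
  case (cons y r)
  define F'' where "F'' = (\<lambda>p. (if p = [] then 0 else F ((y # hd p) # tl p)))"
  have "SP (y # r) F = SP r (\<lambda>p. F ([y] # p)) + SP r F''"
    by (simp add: SP_Cons SP_add F''_def)
  also have "SP r F'' = (\<Sum>k = 1..length r. SP (drop k r) (\<lambda>p. F'' (take k r # p)))"
    by (rule cons.IH)
  also have "\<dots> = (\<Sum>k = 1..length r. SP (drop k r) (\<lambda>p. F ((y # take k r) # p)))"
    by (simp add: F''_def)
  also have "\<dots> = (\<Sum>k = Suc 1..Suc (length r). SP (drop k (y # r)) (\<lambda>p. F (take k (y # r) # p)))"
    by (simp only: sum.shift_bounds_cl_Suc_ivl) simp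
  finally have *: "SP (y # r) F = SP r (\<lambda>p. F ([y] # p)) + (\<Sum>k = Suc 1..Suc (length r). SP (drop k (y # r)) (\<lambda>p. F (take k (y # r) # p)))" .
  have "(\<Sum>k = 1..Suc (length r). SP (drop k (y # r)) (\<lambda>p. F (take k (y # r) # p))) =
     SP (drop 1 (y # r)) (\<lambda>p. F (take 1 (y # r) # p)) + (\<Sum>k = Suc 1..Suc (length r). SP (drop k (y # r)) (\<lambda>p. F (take k (y # r) # p)))"
    by (rule sum.atLeast_Suc_atMost) simp
  then show ?case using * by simp
qed

lemma lparts_map: "lparts (map f x) = map (map (map f)) (lparts x)"
proof (induction x)
  case Nil then show ?case by simp
next
  case (Cons y r)
  have "filter (\<lambda>p. p \<noteq> []) (map (map (map f)) (lparts r)) = map (map (map f)) (filter (\<lambda>p. p \<noteq> []) (lparts r))"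
    by (simp add: filter_map o_def)
  moreover have "\<And>p. p \<noteq> [] \<Longrightarrow> (f y # hd (map (map f) p)) # tl (map (map f) p) = map (map f) ((y # hd p) # tl p)"
    by (simp add: hd_map map_tl)
  ultimately show ?case using Cons by (simp add: o_def)
qed

lemma SP_map: "SP (map f x) F = SP x (\<lambda>P. F (map (map f) P))"
  by (simp add: SP_def lparts_map o_def)

definition revP :: "'a list list \<Rightarrow> 'a list list" where
  "revP P = rev (map rev P)"

lemma revP_revP[simp]: "revP (revP P) = P"
  by (simp add: revP_def rev_map o_def)

lemma concat_revP[simp]: "concat (revP P) = rev (concat P)"
  by (simp add: revP_def rev_concat rev_map)

lemma revP_nil_iff[simp]: "([] \<in> set (revP P)) = ([] \<in> set P)"
  by (auto simp: revP_def)

lemma SP_rev: "SP (rev x) F = SP x (\<lambda>P. F (revP P))"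
  unfolding SP_sum_set
  by (rule sum.reindex_bij_witness[where i=revP and j=revP]) auto

fun PP :: "'a list list \<Rightarrow> ('a list list list \<Rightarrow> 'b::comm_ring_1) \<Rightarrow> 'b" where
  "PP [] G = G []"
| "PP (B # R) G = SP B (\<lambda>p. PP R (\<lambda>q. G (p # q)))"

lemma PP_add: "PP R (\<lambda>q. F q + G q) = PP R F + PP R G"
  by (induction R arbitrary: F G) (simp_all add: SP_add)

lemma PP_mult: "PP R (\<lambda>q. c * F q) = c * PP R F"
  by (induction R arbitrary: F) (simp_all add: SP_mult)

lemma PP_zero: "PP R (\<lambda>q. 0) = 0"
  using PP_mult[of R 0 "\<lambda>q. 0"] by simp

lemma DPR: "SP x (\<lambda>P. SP P G) = SP x (\<lambda>R. PP R G)"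
proof (induction x arbitrary: G)
  case Nil then show ?case by simp
next
  case (Cons y r)
  define H1 where "H1 = (\<lambda>q. G ([[y]] # q) + (if q = [] then 0 else G (([y] # hd q) # tl q)))"
  define K where "K = (\<lambda>QQ. (if QQ = [] then 0 else if hd QQ = [] then 0 else G (((y # hd (hd QQ)) # tl (hd QQ)) # tl QQ)))"
  have e1: "SP ([y] # p) G = SP p H1" for p
    by (simp add: SP_Cons H1_def)
  have e2: "(if p = [] then 0 else SP ((y # hd p) # tl p) G) = SP p K" for p
    by (cases p) (simp_all add: SP_Cons K_def cong: if_cong)
  have "SP (y # r) (\<lambda>P. SP P G) = SP r (\<lambda>p. SP ([y] # p) G + (if p = [] then 0 else SP ((y # hd p) # tl p) G))"
    by (rule SP_Cons)
  also have "\<dots> = SP r (\<lambda>p. SP p H1 + SP p K)"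
    by (simp only: e1 e2)
  also have "\<dots> = SP r (\<lambda>p. SP p (\<lambda>q. H1 q + K q))"
    by (simp only: SP_add)
  also have "\<dots> = SP r (\<lambda>R. PP R (\<lambda>q. H1 q + K q))"
    by (rule Cons.IH)
  also have "\<dots> = SP (y # r) (\<lambda>R. PP R G)"
    unfolding SP_Cons
  proof (rule arg_cong[where f="SP r"], rule ext)
    fix R
    have a: "PP ([y] # R) G = PP R (\<lambda>q. G ([[y]] # q))" by (simp add: SP_single)
    show "PP R (\<lambda>q. H1 q + K q) = PP ([y] # R) G + (if R = [] then 0 else PP ((y # hd R) # tl R) G)"
    proof (cases R)
      case Nil then show ?thesis using a by (simp add: H1_def K_def SP_single)
    next
      case (Cons C R')
      have b: "PP R (\<lambda>q. if q = [] then 0 else G (([y] # hd q) # tl q)) = SP C (\<lambda>p. PP R' (\<lambda>q. G (([y] # p) # q)))"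
        using Cons by simp
      have k: "K (p # q) = (if p = [] then 0 else G (((y # hd p) # tl p) # q))" for p q
        by (simp add: K_def)
      have "PP R K = SP C (\<lambda>p. PP R' (\<lambda>q. K (p # q)))"
        using Cons by simp
      also have "\<dots> = SP C (\<lambda>p. if p = [] then 0 else PP R' (\<lambda>q. G (((y # hd p) # tl p) # q)))"
      proof (rule SP_cong)
        fix p
        show "PP R' (\<lambda>q. K (p # q)) = (if p = [] then 0 else PP R' (\<lambda>q. G (((y # hd p) # tl p) # q)))"
          by (cases "p = []") (simp_all only: k PP_zero if_True if_False simp_thms)
      qed
      finally have c: "PP R K = SP C (\<lambda>p. if p = [] then 0 else PP R' (\<lambda>q. G (((y # hd p) # tl p) # q)))" .
      have d: "PP ((y # hd R) # tl R) G = SP C (\<lambda>p. PP R' (\<lambda>q. G (([y] # p) # q))) + SP C (\<lambda>p. if p = [] then 0 else PP R' (\<lambda>q. G (((y # hd p) # tl p) # q)))"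
        using Cons by (simp add: SP_Cons SP_add)
      show ?thesis
        unfolding H1_def using a b c d Cons by (simp add: PP_add)
    qed
  qed
  finally show ?case .
qed

lemma PP_factor: "PP R (\<lambda>QQ. H (map concat QQ) * prod_list (map g QQ)) = H R * prod_list (map (\<lambda>B. SP B g) R)"
proof (induction R arbitrary: H)
  case Nil then show ?case by simp
next
  case (Cons B R)
  have "PP (B # R) (\<lambda>QQ. H (map concat QQ) * prod_list (map g QQ))
      = SP B (\<lambda>p. PP R (\<lambda>q. g p * (H (concat p # map concat q) * prod_list (map g q))))"
    by (simp add: ac_simps)
  also have "\<dots> = SP B (\<lambda>p. g p * (H (concat p # R) * prod_list (map (\<lambda>B. SP B g) R)))"
  proof -
    have "PP R (\<lambda>q. H (concat p # map concat q) * prod_list (map g q)) = H (concat p # R) * prod_list (map (\<lambda>B. SP B g) R)" for p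
      using Cons.IH[of "\<lambda>R. H (concat p # R)"] by simp
    then show ?thesis by (simp add: PP_mult)
  qed
  also have "\<dots> = SP B (\<lambda>p. g p * (H (B # R) * prod_list (map (\<lambda>B. SP B g) R)))"
    by (rule SP_cong) simp
  also have "\<dots> = H (B # R) * prod_list (map (\<lambda>B. SP B g) (B # R))"
    by (simp add: SP_mult_right ac_simps)
  finally show ?case .
qed



definition adjfree :: "('a \<Rightarrow> 'a \<Rightarrow> bool) \<Rightarrow> 'a list \<Rightarrow> bool" where
  "adjfree p B = (\<forall>i. Suc i < length B \<longrightarrow> \<not> p (B ! i) (B ! Suc i))"

lemma adjfree_Nil[simp]: "adjfree p []"
  by (simp add: adjfree_def)

lemma adjfree_Cons: "adjfree p (x # r) = ((r \<noteq> [] \<longrightarrow> \<not> p x (hd r)) \<and> adjfree p r)"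
proof
  assume a: "adjfree p (x # r)"
  have "r \<noteq> [] \<longrightarrow> \<not> p x (hd r)"
    using a[unfolded adjfree_def, rule_format, of 0] by (cases r) auto
  moreover have "adjfree p r"
    unfolding adjfree_def
  proof (intro allI impI)
    fix i assume "Suc i < length r"
    then show "\<not> p (r ! i) (r ! Suc i)" using a[unfolded adjfree_def, rule_format, of "Suc i"] by simp
  qed
  ultimately show "(r \<noteq> [] \<longrightarrow> \<not> p x (hd r)) \<and> adjfree p r" by blast
next
  assume a: "(r \<noteq> [] \<longrightarrow> \<not> p x (hd r)) \<and> adjfree p r"
  show "adjfree p (x # r)"
    unfolding adjfree_def
  proof (intro allI impI)
    fix i assume i: "Suc i < length (x # r)"
    show "\<not> p ((x # r) ! i) ((x # r) ! Suc i)"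
    proof (cases i)
      case 0
      then show ?thesis using a i by (cases r) auto
    next
      case (Suc j)
      then show ?thesis using a i unfolding adjfree_def by auto
    qed
  qed
qed

lemma adjfree_append:
  "adjfree p (xs @ ys) = (adjfree p xs \<and> adjfree p ys \<and> (xs \<noteq> [] \<longrightarrow> ys \<noteq> [] \<longrightarrow> \<not> p (last xs) (hd ys)))"
proof (induction xs)
  case Nil then show ?case by simp
next
  case (Cons x xs)
  then show ?case by (cases xs) (auto simp: adjfree_Cons)
qed

lemma adjfree_rev: "adjfree p (rev B) = adjfree (\<lambda>x y. p y x) B"
proof (induction B)
  case Nil then show ?case by simp
next
  case (Cons x B)
  then show ?case by (auto simp: adjfree_append adjfree_Cons last_rev)
qed

lemma not_adjfree_split:
  assumes "\<not> adjfree p B"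
  shows "\<exists>xs ys. B = xs @ ys \<and> xs \<noteq> [] \<and> ys \<noteq> [] \<and> p (last xs) (hd ys)"
proof -
  obtain i where i: "Suc i < length B" "p (B ! i) (B ! Suc i)"
    using assms unfolding adjfree_def by blast
  have "last (take (Suc i) B) = B ! i"
    using i(1) by (simp add: take_Suc_conv_app_nth)
  moreover have "hd (drop (Suc i) B) = B ! Suc i"
    using i(1) by (simp add: hd_drop_conv_nth)
  ultimately show ?thesis using i
    by (intro exI[of _ "take (Suc i) B"] exI[of _ "drop (Suc i) B"]) auto
qed

definition OEp :: "nat \<Rightarrow> nat \<Rightarrow> bool" where "OEp x y = (odd x \<and> even y)"
definition EOp :: "nat \<Rightarrow> nat \<Rightarrow> bool" where "EOp x y = (even x \<and> odd y)"

lemma OEp_flip: "(\<lambda>x y. OEp y x) = EOp"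
  by (auto simp: OEp_def EOp_def fun_eq_iff)

definition wb :: "nat list \<Rightarrow> rat" where
  "wb B = 1 / (of_nat (fact (length (filter odd B))) * of_nat (fact (length (filter even B))))"

definition samepar :: "nat list \<Rightarrow> bool" where
  "samepar B = ((\<forall>x\<in>set B. odd x) \<or> (\<forall>x\<in>set B. even x))"

lemma samepar_adjfree: "samepar B \<Longrightarrow> adjfree OEp B \<and> adjfree EOp B"
proof -
  assume s: "samepar B"
  have "\<not> OEp (B ! i) (B ! Suc i) \<and> \<not> EOp (B ! i) (B ! Suc i)" if "Suc i < length B" for i
  proof -
    have "B ! i \<in> set B" "B ! Suc i \<in> set B" using that by simp_all
    then show ?thesis using s unfolding samepar_def OEp_def EOp_def by blast
  qed
  then show ?thesis unfolding adjfree_def by blast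
qed

lemma samepar_wb: "samepar B \<Longrightarrow> wb B = 1 / of_nat (fact (length B))"
proof -
  assume "samepar B"
  then consider "\<forall>x\<in>set B. odd x" | "\<forall>x\<in>set B. even x" unfolding samepar_def by blast
  then show ?thesis
  proof cases
    case 1
    then have "filter odd B = B" "filter even B = []" by (simp_all add: filter_id_conv filter_empty_conv)
    then show ?thesis by (simp add: wb_def)
  next
    case 2
    then have "filter even B = B" "filter odd B = []" by (simp_all add: filter_id_conv filter_empty_conv)
    then show ?thesis by (simp add: wb_def)
  qed
qed

lemma samepar_take: "samepar B \<Longrightarrow> samepar (take k B)"
  unfolding samepar_def by (meson in_set_takeD)

lemma samepar_drop: "samepar B \<Longrightarrow> samepar (drop k B)"
  unfolding samepar_def by (meson in_set_dropD)

lemma adjfree_both_samepar: "adjfree OEp B \<Longrightarrow> adjfree EOp B \<Longrightarrow> samepar B"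
proof (induction B)
  case Nil then show ?case by (simp add: samepar_def)
next
  case (Cons x r)
  then have r: "samepar r" by (simp add: adjfree_Cons)
  show ?case
  proof (cases r)
    case Nil then show ?thesis by (simp add: samepar_def)
  next
    case (Cons y r')
    then have "\<not> OEp x y" "\<not> EOp x y" using Cons.prems by (auto simp: adjfree_Cons)
    then have "odd x = odd y" by (auto simp: OEp_def EOp_def)
    then show ?thesis using r Cons unfolding samepar_def by auto
  qed
qed

lemma EO_last_odd: "adjfree EOp xs \<Longrightarrow> xs \<noteq> [] \<Longrightarrow> odd (last xs) \<Longrightarrow> \<forall>x\<in>set xs. odd x"
proof (induction xs)
  case Nil then show ?case by simp
next
  case (Cons x r)
  show ?case
  proof (cases "r = []")
    case True then show ?thesis using Cons.prems(3) by simp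
  next
    case False
    have p: "adjfree EOp r" "\<not> EOp x (hd r)" using Cons.prems(1) False by (simp_all only: adjfree_Cons simp_thms)
    have "odd (last r)" using Cons.prems(3) False by simp
    then have r: "\<forall>x\<in>set r. odd x" using Cons.IH p(1) False by blast
    then have "odd (hd r)" using False by simp
    then have "odd x" using p(2) unfolding EOp_def by blast
    then show ?thesis using r by simp
  qed
qed

lemma EO_hd_even: "adjfree EOp ys \<Longrightarrow> ys \<noteq> [] \<Longrightarrow> even (hd ys) \<Longrightarrow> \<forall>x\<in>set ys. even x"
proof (induction ys)
  case Nil then show ?case by simp
next
  case (Cons y r)
  show ?case
  proof (cases "r = []")
    case True then show ?thesis using Cons.prems(3) by simp
  next
    case False
    have p: "adjfree EOp r" "\<not> EOp y (hd r)" using Cons.prems(1) False by (simp_all only: adjfree_Cons simp_thms)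
    have "even y" using Cons.prems(3) by simp
    then have "even (hd r)" using p(2) unfolding EOp_def by blast
    then have r: "\<forall>x\<in>set r. even x" using Cons.IH p(1) False by blast
    then show ?thesis using \<open>even y\<close> by simp
  qed
qed

lemma OE_last_even: "adjfree OEp xs \<Longrightarrow> xs \<noteq> [] \<Longrightarrow> even (last xs) \<Longrightarrow> \<forall>x\<in>set xs. even x"
proof (induction xs)
  case Nil then show ?case by simp
next
  case (Cons x r)
  show ?case
  proof (cases "r = []")
    case True then show ?thesis using Cons.prems(3) by simp
  next
    case False
    have p: "adjfree OEp r" "\<not> OEp x (hd r)" using Cons.prems(1) False by (simp_all only: adjfree_Cons simp_thms)
    have "even (last r)" using Cons.prems(3) False by simp
    then have r: "\<forall>x\<in>set r. even x" using Cons.IH p(1) False by blast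
    then have "even (hd r)" using False by simp
    then have "even x" using p(2) unfolding OEp_def by blast
    then show ?thesis using r by simp
  qed
qed

lemma OE_hd_odd: "adjfree OEp ys \<Longrightarrow> ys \<noteq> [] \<Longrightarrow> odd (hd ys) \<Longrightarrow> \<forall>x\<in>set ys. odd x"
proof (induction ys)
  case Nil then show ?case by simp
next
  case (Cons y r)
  show ?case
  proof (cases "r = []")
    case True then show ?thesis using Cons.prems(3) by simp
  next
    case False
    have p: "adjfree OEp r" "\<not> OEp y (hd r)" using Cons.prems(1) False by (simp_all only: adjfree_Cons simp_thms)
    have "odd y" using Cons.prems(3) by simp
    then have "odd (hd r)" using p(2) unfolding OEp_def by blast
    then have r: "\<forall>x\<in>set r. odd x" using Cons.IH p(1) False by blast
    then show ?thesis using \<open>odd y\<close> by simp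
  qed
qed

lemma wb_append_oe: "(\<forall>x\<in>set C. odd x) \<Longrightarrow> (\<forall>x\<in>set D. even x) \<Longrightarrow> wb (C @ D) = wb C * wb D"
  unfolding wb_def by (simp add: filter_id_conv filter_empty_conv)

lemma wb_append_eo: "(\<forall>x\<in>set C. even x) \<Longrightarrow> (\<forall>x\<in>set D. odd x) \<Longrightarrow> wb (C @ D) = wb C * wb D"
  unfolding wb_def by (simp add: filter_id_conv filter_empty_conv mult.commute)

lemma part_last:
  assumes "concat P = xs" "[] \<notin> set P" "xs \<noteq> []"
  shows "P \<noteq> [] \<and> last P \<noteq> [] \<and> last (last P) = last xs \<and> set (last P) \<subseteq> set xs"
proof -
  have Pne: "P \<noteq> []" using assms by auto
  then have "P = butlast P @ [last P]" by simp
  moreover have "concat (butlast P @ [last P]) = concat (butlast P) @ last P" by simp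
  ultimately have "xs = concat (butlast P) @ last P" using assms(1) by simp
  moreover have "last P \<in> set P" using Pne by simp
  then have "last P \<noteq> []" using assms(2) by auto
  ultimately show ?thesis using Pne by auto
qed

lemma part_hd:
  assumes "concat Q = ys" "[] \<notin> set Q" "ys \<noteq> []"
  shows "Q \<noteq> [] \<and> hd Q \<noteq> [] \<and> hd (hd Q) = hd ys \<and> set (hd Q) \<subseteq> set ys"
proof -
  have Qne: "Q \<noteq> []" using assms by auto
  then have "ys = hd Q @ concat (tl Q)" using assms(1) by (cases Q) auto
  moreover have "hd Q \<in> set Q" using Qne by simp
  then have "hd Q \<noteq> []" using assms(2) by auto
  ultimately show ?thesis using Qne by auto
qed

definition phi :: "nat list \<Rightarrow> rat" where
  "phi C = (if adjfree EOp C then - wb C else 0)"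

definition Phi :: "nat list list \<Rightarrow> rat" where
  "Phi p = prod_list (map phi p)"

definition g0 :: "nat list \<Rightarrow> rat" where
  "g0 B = (if adjfree OEp B then (-1) ^ length B * wb B else 0)"

lemma Phi_append: "Phi (P @ Q) = Phi P * Phi Q"
  by (simp add: Phi_def)

lemma Phi_mrg: "Phi (mrg P Q) = Phi (butlast P) * phi (last P @ hd Q) * Phi (tl Q)"
  by (simp add: Phi_def mrg_def)

lemma Phi_last: "P \<noteq> [] \<Longrightarrow> Phi P = Phi (butlast P) * phi (last P)"
proof -
  assume "P \<noteq> []"
  then have e: "P = butlast P @ [last P]" by simp
  have "Phi (butlast P @ [last P]) = Phi (butlast P) * phi (last P)" by (simp add: Phi_def)
  then show ?thesis using e by metis
qed

lemma Phi_hd: "Q \<noteq> [] \<Longrightarrow> Phi Q = phi (hd Q) * Phi (tl Q)"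
  by (cases Q) (simp_all add: Phi_def)

lemma binom_alt:
  assumes "n \<ge> 1"
  shows "(\<Sum>k = 1..n. (- (1 / of_nat (fact k))) * ((-1) ^ (n - k) * (1 / of_nat (fact (n - k))))) = ((-1) ^ n * (1 / of_nat (fact n)) :: rat)"
proof -
  have "(\<Sum>k\<le>n. of_nat (n choose k) * (1::rat) ^ k * (-1) ^ (n - k)) = (1 + (-1)) ^ n"
    by (rule binomial_ring[symmetric])
  also have "\<dots> = 0" using assms by simp
  finally have s0: "(\<Sum>k\<le>n. of_nat (n choose k) * (-1::rat) ^ (n - k)) = 0" by simp
  have "(\<Sum>k\<le>n. of_nat (n choose k) * (-1::rat) ^ (n - k)) = of_nat (fact n) * (\<Sum>k\<le>n. (-1) ^ (n - k) * (1 / (of_nat (fact k) * of_nat (fact (n - k)))))"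
    unfolding sum_distrib_left
    by (rule sum.cong) (auto simp: binomial_fact)
  with s0 have s1: "(\<Sum>k\<le>n. (-1) ^ (n - k) * (1 / (of_nat (fact k) * of_nat (fact (n - k))))) = (0::rat)"
    by simp
  have "{..n} = insert 0 {1..n}" by auto
  then have "(\<Sum>k\<le>n. (-1) ^ (n - k) * (1 / (of_nat (fact k) * of_nat (fact (n - k))))) =
     (-1) ^ n * (1 / of_nat (fact n)) + (\<Sum>k = 1..n. (-1) ^ (n - k) * (1 / (of_nat (fact k) * of_nat (fact (n - k)))) :: rat)"
    by simp
  with s1 have s2: "(\<Sum>k = 1..n. (-1) ^ (n - k) * (1 / (of_nat (fact k) * of_nat (fact (n - k))))) = - ((-1) ^ n * (1 / of_nat (fact n)) :: rat)"
    by (simp add: add_eq_0_iff2)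
  have "(\<Sum>k = 1..n. (- (1 / of_nat (fact k))) * ((-1) ^ (n - k) * (1 / of_nat (fact (n - k))))) =
      - (\<Sum>k = 1..n. (-1) ^ (n - k) * (1 / (of_nat (fact k) * of_nat (fact (n - k)))) :: rat)"
    by (simp add: sum_negf[symmetric] field_simps)
  then show ?thesis using s2 by simp
qed



lemma g0_EO_junction:
  assumes "xs \<noteq> []" "ys \<noteq> []" "EOp (last xs) (hd ys)"
  shows "g0 xs * g0 ys = g0 (xs @ ys)"
proof (cases "adjfree OEp xs \<and> adjfree OEp ys")
  case True
  have nj: "\<not> OEp (last xs) (hd ys)" using assms(3) by (simp add: OEp_def EOp_def)
  have ae: "adjfree OEp (xs @ ys)" using True nj by (simp add: adjfree_append)
  have xe: "\<forall>x\<in>set xs. even x" using OE_last_even[of xs] True assms by (simp add: EOp_def)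
  have yo: "\<forall>x\<in>set ys. odd x" using OE_hd_odd[of ys] True assms by (simp add: EOp_def)
  have "wb (xs @ ys) = wb xs * wb ys" by (rule wb_append_eo[OF xe yo])
  then show ?thesis using True ae by (simp add: g0_def power_add)
next
  case False
  then have "\<not> adjfree OEp (xs @ ys)" by (auto simp: adjfree_append)
  then show ?thesis using False by (auto simp: g0_def)
qed

lemma Phi_Cons: "Phi (C # p) = phi C * Phi p"
  by (simp add: Phi_def)

lemma lemmaF: "SP B Phi = g0 B"
proof (induction "length B" arbitrary: B rule: less_induct)
  case less
  show ?case
  proof (cases "adjfree EOp B")
    case False
    obtain xs ys where s: "B = xs @ ys" "xs \<noteq> []" "ys \<noteq> []" "EOp (last xs) (hd ys)"
      using not_adjfree_split[OF False] by blast
    have "SP B Phi = SP xs (\<lambda>P. SP ys (\<lambda>Q. Phi (P @ Q) + Phi (mrg P Q)))"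
      using SP_append[OF s(2,3)] s(1) by simp
    also have "\<dots> = SP xs (\<lambda>P. SP ys (\<lambda>Q. Phi P * Phi Q))"
    proof (rule SP_cong)
      fix P assume P: "concat P = xs" "[] \<notin> set P"
      show "SP ys (\<lambda>Q. Phi (P @ Q) + Phi (mrg P Q)) = SP ys (\<lambda>Q. Phi P * Phi Q)"
      proof (rule SP_cong)
        fix Q assume Q: "concat Q = ys" "[] \<notin> set Q"
        have lp: "last P \<noteq> []" "last (last P) = last xs" using part_last[OF P s(2)] by auto
        have hq: "hd Q \<noteq> []" "hd (hd Q) = hd ys" using part_hd[OF Q s(3)] by auto
        have "\<not> adjfree EOp (last P @ hd Q)" using lp hq s(4) by (simp add: adjfree_append)
        then have "phi (last P @ hd Q) = 0" by (simp add: phi_def)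
        then show "Phi (P @ Q) + Phi (mrg P Q) = Phi P * Phi Q" by (simp add: Phi_append Phi_mrg)
      qed
    qed
    also have "\<dots> = SP xs Phi * SP ys Phi"
      by (simp add: SP_mult SP_mult_right)
    also have "\<dots> = g0 xs * g0 ys"
      using less s by simp
    also have "\<dots> = g0 B"
      using g0_EO_junction[OF s(2-4)] s(1) by simp
    finally show ?thesis .
  next
    case EOfree: True
    show ?thesis
    proof (cases "adjfree OEp B")
      case False
      obtain xs ys where s: "B = xs @ ys" "xs \<noteq> []" "ys \<noteq> []" "OEp (last xs) (hd ys)"
        using not_adjfree_split[OF False] by blast
      have ea: "adjfree EOp xs" "adjfree EOp ys" using EOfree s(1) by (simp_all add: adjfree_append)
      have xo: "\<forall>x\<in>set xs. odd x" using EO_last_odd[OF ea(1) s(2)] s(4) by (simp add: OEp_def)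
      have ye: "\<forall>x\<in>set ys. even x" using EO_hd_even[OF ea(2) s(3)] s(4) by (simp add: OEp_def)
      have "SP B Phi = SP xs (\<lambda>P. SP ys (\<lambda>Q. Phi (P @ Q) + Phi (mrg P Q)))"
        using SP_append[OF s(2,3)] s(1) by simp
      also have "\<dots> = SP xs (\<lambda>P. SP ys (\<lambda>Q. 0))"
      proof (rule SP_cong)
        fix P assume P: "concat P = xs" "[] \<notin> set P"
        show "SP ys (\<lambda>Q. Phi (P @ Q) + Phi (mrg P Q)) = SP ys (\<lambda>Q. 0)"
        proof (rule SP_cong)
          fix Q assume Q: "concat Q = ys" "[] \<notin> set Q"
          have lp: "P \<noteq> []" "last P \<noteq> []" "set (last P) \<subseteq> set xs" using part_last[OF P s(2)] by auto
          have hq: "Q \<noteq> []" "hd Q \<noteq> []" "set (hd Q) \<subseteq> set ys" using part_hd[OF Q s(3)] by auto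
          define C where "C = last P"
          define D where "D = hd Q"
          have Co: "\<forall>x\<in>set C. odd x" using lp xo unfolding C_def by blast
          have De: "\<forall>x\<in>set D. even x" using hq ye unfolding D_def by blast
          have sC: "samepar C" "samepar D" using Co De by (auto simp: samepar_def)
          have pC: "phi C = - wb C" "phi D = - wb D"
            using samepar_adjfree[OF sC(1)] samepar_adjfree[OF sC(2)] by (simp_all add: phi_def)
          have "last C \<in> set C" using lp unfolding C_def by simp
          then have "odd (last C)" using Co by blast
          then have "adjfree EOp (C @ D)"
            using samepar_adjfree[OF sC(1)] samepar_adjfree[OF sC(2)] by (simp add: adjfree_append EOp_def)
          then have "phi (C @ D) = - (wb C * wb D)"
            using wb_append_oe[OF Co De] by (simp add: phi_def)
          then have pCD: "phi (C @ D) = - (phi C * phi D)" using pC by simp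
          have "Phi (P @ Q) = Phi (butlast P) * phi C * (phi D * Phi (tl Q))"
            using Phi_last[OF lp(1)] Phi_hd[OF hq(1)] unfolding C_def D_def by (simp add: Phi_append)
          moreover have "Phi (mrg P Q) = Phi (butlast P) * phi (C @ D) * Phi (tl Q)"
            unfolding C_def D_def by (rule Phi_mrg)
          ultimately show "Phi (P @ Q) + Phi (mrg P Q) = 0"
            using pCD by (simp add: algebra_simps)
        qed
      qed
      also have "\<dots> = 0" by (simp add: SP_def)
      also have "\<dots> = g0 B" using False by (simp add: g0_def)
      finally show ?thesis .
    next
      case True
      have sB: "samepar B" using adjfree_both_samepar[OF True EOfree] .
      show ?thesis
      proof (cases "B = []")
        case True then show ?thesis by (simp add: Phi_def g0_def wb_def)
      next
        case Bne: False
        define n where "n = length B"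
        have n1: "n \<ge> 1" using Bne unfolding n_def by (cases B) auto
        have "SP B Phi = (\<Sum>k = 1..n. SP (drop k B) (\<lambda>p. Phi (take k B # p)))"
          unfolding n_def by (rule SP_first_block[OF Bne])
        also have "\<dots> = (\<Sum>k = 1..n. (- (1 / of_nat (fact k))) * ((-1) ^ (n - k) * (1 / of_nat (fact (n - k)))))"
        proof (rule sum.cong)
          fix k assume k: "k \<in> {1..n}"
          have st: "samepar (take k B)" "samepar (drop k B)" using samepar_take[OF sB] samepar_drop[OF sB] by auto
          have lt: "length (take k B) = k" "length (drop k B) = n - k" using k unfolding n_def by auto
          have "phi (take k B) = - (1 / of_nat (fact k))"
            using samepar_adjfree[OF st(1)] samepar_wb[OF st(1)] lt by (simp add: phi_def)
          moreover have "SP (drop k B) Phi = g0 (drop k B)"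
          proof -
            have "length (drop k B) < length B" using k n1 unfolding n_def by auto
            then show ?thesis using less by blast
          qed
          moreover have "g0 (drop k B) = (-1) ^ (n - k) * (1 / of_nat (fact (n - k)))"
            using samepar_adjfree[OF st(2)] samepar_wb[OF st(2)] lt by (simp add: g0_def)
          moreover have "SP (drop k B) (\<lambda>p. Phi (take k B # p)) = phi (take k B) * SP (drop k B) Phi"
            by (simp only: Phi_Cons SP_mult)
          ultimately show "SP (drop k B) (\<lambda>p. Phi (take k B # p)) = (- (1 / of_nat (fact k))) * ((-1) ^ (n - k) * (1 / of_nat (fact (n - k))))"
            by metis
        qed simp
        also have "\<dots> = (-1) ^ n * (1 / of_nat (fact n))"
          by (rule binom_alt[OF n1])
        also have "\<dots> = g0 B"
          using samepar_adjfree[OF sB] samepar_wb[OF sB] unfolding n_def by (simp add: g0_def)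
        finally show ?thesis .
      qed
    qed
  qed
qed



abbreviation bsums :: "nat list list \<Rightarrow> nat list" where
  "bsums P \<equiv> map sum_list P"

definition Qc :: "nat list \<Rightarrow> nat list \<Rightarrow> nat list \<Rightarrow> rat" where
  "Qc b d c = of_nat (count_list (qsh b d) c)"

lemma qsh_Nil2[simp]: "qsh b [] = [b]"
  by (cases b) auto

lemma count_map_Cons: "count_list (map ((#) x) L) (c1 # c') = (if x = c1 then count_list L c' else 0)"
  by (induction L) auto

lemma count_map_Nil: "count_list (map ((#) x) L) [] = 0"
  by (induction L) auto

lemma Qc_Nil_d: "Qc b [] c = (if c = b then 1 else 0)"
  by (simp add: Qc_def)

lemma Qc_Nil_c: "Qc b d [] = (if b = [] \<and> d = [] then 1 else 0)"
  by (cases b; cases d) (simp_all add: Qc_def count_map_Nil)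

lemma Qc_cons: "Qc b d (c1 # c') =
   (if b = [] then 0 else if c1 = hd b then Qc (tl b) d c' else 0) +
   (if d = [] then 0 else (if c1 = hd d then Qc b (tl d) c' else 0) +
      (if b = [] then 0 else if c1 = hd b + hd d then Qc (tl b) (tl d) c' else 0))"
  by (cases b; cases d) (auto simp add: Qc_def count_map_Cons)

definition TT :: "nat list \<Rightarrow> nat list \<Rightarrow> nat list \<Rightarrow> rat" where
  "TT r d c = SP r (\<lambda>P. Qc (bsums P) d c)"

definition T1 :: "nat list \<Rightarrow> nat list \<Rightarrow> nat \<Rightarrow> nat list \<Rightarrow> rat" where
  "T1 r d c1 c' = SP r (\<lambda>P. if P = [] then 0 else if c1 = sum_list (hd P) then Qc (bsums (tl P)) d c' else 0)"

definition T23 :: "nat list \<Rightarrow> nat list \<Rightarrow> nat \<Rightarrow> nat list \<Rightarrow> rat" where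
  "T23 r d c1 c' = (if d = [] then 0 else SP r (\<lambda>P. (if c1 = hd d then Qc (bsums P) (tl d) c' else 0) +
      (if P = [] then 0 else if c1 = hd d + sum_list (hd P) then Qc (bsums (tl P)) (tl d) c' else 0)))"

lemma TT_split: "TT r d (c1 # c') = T1 r d c1 c' + T23 r d c1 c'"
proof (cases "d = []")
  case True
  then show ?thesis unfolding TT_def T1_def T23_def
    by (simp, intro SP_cong) (simp add: Qc_cons hd_map map_tl)
next
  case False
  have "TT r d (c1 # c') = SP r (\<lambda>P. (if P = [] then 0 else if c1 = sum_list (hd P) then Qc (bsums (tl P)) d c' else 0) +
     ((if c1 = hd d then Qc (bsums P) (tl d) c' else 0) +
      (if P = [] then 0 else if c1 = hd d + sum_list (hd P) then Qc (bsums (tl P)) (tl d) c' else 0)))"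
    unfolding TT_def by (intro SP_cong) (simp add: Qc_cons hd_map map_tl False)
  then show ?thesis unfolding T1_def T23_def using False by (simp add: SP_add)
qed

lemma T1_Nil: "T1 [] d c1 c' = 0"
  by (simp add: T1_def)

lemma T23_Nil: "T23 r [] c1 c' = 0"
  by (simp add: T23_def)

lemma T1_Cons: "T1 (y # r) d c1 c' = T23 r (y # d) c1 c'"
  unfolding T1_def T23_def by (simp add: SP_Cons cong: if_cong)

lemma TT_Nil_c: "TT r d [] = (if r = [] \<and> d = [] then 1 else 0)"
proof (cases "r = []")
  case True then show ?thesis by (simp add: TT_def Qc_Nil_c)
next
  case False
  then show ?thesis unfolding TT_def by (simp, intro SP_zero) (auto simp: Qc_Nil_c)
qed

lemma telescope:
  fixes u :: "nat \<Rightarrow> rat"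
  shows "(\<Sum>i<n. (-1) ^ i * (u i + u (Suc i))) = u 0 - (-1) ^ n * u n"
  by (induction n) (simp_all add: algebra_simps)

lemma comp_len_le: "is_comp a \<Longrightarrow> length a \<le> sum_list a"
  by (induction a) (auto simp: is_comp_def)

lemma finite_comps_le: "finite {a. is_comp a \<and> sum_list a \<le> n}"
proof -
  have "{a. is_comp a \<and> sum_list a \<le> n} \<subseteq> {xs. set xs \<subseteq> {..n} \<and> length xs \<le> n}"
  proof
    fix a assume "a \<in> {a. is_comp a \<and> sum_list a \<le> n}"
    then have a: "is_comp a" "sum_list a \<le> n" by auto
    have "set a \<subseteq> {..n}" using a member_le_sum_list[of _ a] by fastforce
    moreover have "length a \<le> n" using a comp_len_le by fastforce
    ultimately show "a \<in> {xs. set xs \<subseteq> {..n} \<and> length xs \<le> n}" by simp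
  qed
  then show ?thesis using finite_lists_length_le[of "{..n}" n] finite_subset by blast
qed

lemma qsh_sum: "x \<in> set (qsh a b) \<Longrightarrow> sum_list x = sum_list a + sum_list b"
  by (induction a b arbitrary: x rule: qsh.induct) auto

lemma qmult_Mb_right:
  assumes "is_comp d"
  shows "qmult f (Mb d) c = (\<Sum>a \<in> {a. is_comp a \<and> sum_list a + sum_list d = sum_list c}. f a * of_nat (count_list (qsh a d) c))"
proof -
  define S where "S = {(a, b). is_comp a \<and> is_comp b \<and> sum_list a + sum_list b = sum_list c}"
  define A where "A = {a. is_comp a \<and> sum_list a + sum_list d = sum_list c}"
  have fS: "finite S"
  proof -
    have "S \<subseteq> {a. is_comp a \<and> sum_list a \<le> sum_list c} \<times> {a. is_comp a \<and> sum_list a \<le> sum_list c}"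
      unfolding S_def by auto
    then show ?thesis using finite_comps_le finite_subset by blast
  qed
  have "qmult f (Mb d) c = (\<Sum>x\<in>S. f (fst x) * Mb d (snd x) * of_nat (count_list (qsh (fst x) (snd x)) c))"
    unfolding qmult_def S_def by (simp add: case_prod_beta)
  also have "\<dots> = (\<Sum>x\<in>S. if snd x = d then f (fst x) * of_nat (count_list (qsh (fst x) (snd x)) c) else 0)"
    by (rule sum.cong) (auto simp: Mb_def)
  also have "\<dots> = (\<Sum>x\<in>{x\<in>S. snd x = d}. f (fst x) * of_nat (count_list (qsh (fst x) (snd x)) c))"
    by (rule sum.inter_filter[OF fS, symmetric])
  also have "{x\<in>S. snd x = d} = (\<lambda>a. (a, d)) ` A"
    unfolding S_def A_def using assms by auto
  also have "(\<Sum>x\<in>(\<lambda>a. (a, d)) ` A. f (fst x) * of_nat (count_list (qsh (fst x) (snd x)) c)) =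
      (\<Sum>a\<in>A. f a * of_nat (count_list (qsh a d) c))"
    by (subst sum.reindex) (auto simp: inj_on_def)
  finally show ?thesis unfolding A_def .
qed

lemma comp_sums:
  assumes "is_comp r" "concat P = r" "[] \<notin> set P"
  shows "is_comp (bsums P)"
  unfolding is_comp_def
proof
  fix x assume "x \<in> set (bsums P)"
  then obtain B where B: "B \<in> set P" "x = sum_list B" by auto
  then have "B \<noteq> []" "set B \<subseteq> set r" using assms by auto
  then obtain y where "y \<in> set B" "0 < y" using assms(1) unfolding is_comp_def by (metis hd_in_set subsetD)
  then show "0 < x" using B member_le_sum_list[of y B] by auto
qed

lemma qmult_TT:
  assumes "is_comp d" "is_comp r"
  shows "qmult (\<lambda>x. s * TT r [] x) (Mb d) c = s * TT r d c"
proof -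
  define A where "A = {a. is_comp a \<and> sum_list a + sum_list d = sum_list c}"
  have fA: "finite A"
  proof -
    have "A \<subseteq> {a. is_comp a \<and> sum_list a \<le> sum_list c}" unfolding A_def by auto
    then show ?thesis using finite_comps_le finite_subset by blast
  qed
  have TT0: "TT r [] x = SP r (\<lambda>P. if x = bsums P then 1 else 0)" for x
    unfolding TT_def by (simp add: Qc_Nil_d)
  have "qmult (\<lambda>x. s * TT r [] x) (Mb d) c = (\<Sum>a\<in>A. s * TT r [] a * of_nat (count_list (qsh a d) c))"
    unfolding A_def by (rule qmult_Mb_right[OF assms(1)])
  also have "\<dots> = (\<Sum>a\<in>A. s * SP r (\<lambda>P. if a = bsums P then Qc a d c else 0))"
  proof (rule sum.cong)
    fix a assume "a \<in> A"
    have "TT r [] a * of_nat (count_list (qsh a d) c) = SP r (\<lambda>P. (if a = bsums P then 1 else 0) * Qc a d c)"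
      unfolding TT0 SP_mult_right Qc_def ..
    also have "\<dots> = SP r (\<lambda>P. if a = bsums P then Qc a d c else 0)"
      by (rule SP_cong) simp
    finally show "s * TT r [] a * of_nat (count_list (qsh a d) c) = s * SP r (\<lambda>P. if a = bsums P then Qc a d c else 0)"
      by (simp add: mult.assoc)
  qed simp
  also have "\<dots> = s * SP r (\<lambda>P. \<Sum>a\<in>A. if a = bsums P then Qc a d c else 0)"
    by (simp add: sum_distrib_left[symmetric] sum_SP_swap)
  also have "\<dots> = s * SP r (\<lambda>P. Qc (bsums P) d c)"
  proof -
    have "(\<Sum>a\<in>A. if a = bsums P then Qc a d c else 0) = Qc (bsums P) d c" if "concat P = r" "[] \<notin> set P" for P
    proof -
      have "(\<Sum>a\<in>A. if a = bsums P then Qc a d c else 0) = (if bsums P \<in> A then Qc (bsums P) d c else 0)"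
        using fA by simp
      also have "\<dots> = Qc (bsums P) d c"
      proof (cases "bsums P \<in> A")
        case False
        then have "sum_list (bsums P) + sum_list d \<noteq> sum_list c"
          using comp_sums[OF assms(2) that] unfolding A_def by auto
        then have "c \<notin> set (qsh (bsums P) d)" using qsh_sum by metis
        then show ?thesis using False by (simp add: Qc_def)
      qed simp
      finally show ?thesis .
    qed
    then show ?thesis by (simp cong: SP_cong)
  qed
  finally show ?thesis unfolding TT_def .
qed



lemma is_comp_take: "is_comp a \<Longrightarrow> is_comp (take i a)"
  unfolding is_comp_def by (meson in_set_takeD)

lemma is_comp_drop: "is_comp a \<Longrightarrow> is_comp (drop i a)"
  unfolding is_comp_def by (meson in_set_dropD)

lemma is_comp_rev: "is_comp (rev a) = is_comp a"
  unfolding is_comp_def by simp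

lemma antM_formula: "is_comp a \<Longrightarrow> antM a = (\<lambda>c. (-1) ^ length a * TT (rev a) [] c)"
proof (induction "length a" arbitrary: a rule: less_induct)
  case less
  have def: "antM a = (if a = [] then Mb [] else (\<lambda>c. - (\<Sum>i<length a. qmult (antM (take i a)) (Mb (drop i a)) c)))"
    by (rule antM.simps)
  show ?case
  proof (cases "a = []")
    case True
    then show ?thesis using def by (auto simp: fun_eq_iff Mb_def TT_def Qc_def)
  next
    case False
    define n where "n = length a"
    have IH: "antM (take i a) = (\<lambda>c. (-1) ^ i * TT (rev (take i a)) [] c)" if "i < n" for i
    proof -
      have "length (take i a) < length a" using that unfolding n_def by simp
      then have "antM (take i a) = (\<lambda>c. (-1) ^ length (take i a) * TT (rev (take i a)) [] c)"
        using less(1) is_comp_take[OF less(2)] by blast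
      then show ?thesis using that unfolding n_def by simp
    qed
    show ?thesis
    proof (rule ext)
      fix c
      define T where "T i = TT (rev (take i a)) (drop i a) c" for i
      have "antM a c = - (\<Sum>i<n. qmult (antM (take i a)) (Mb (drop i a)) c)"
        using def False unfolding n_def by simp
      also have "\<dots> = - (\<Sum>i<n. (-1) ^ i * T i)"
      proof -
        have "qmult (antM (take i a)) (Mb (drop i a)) c = (-1) ^ i * T i" if "i < n" for i
          unfolding IH[OF that] T_def
          by (rule qmult_TT) (simp_all add: is_comp_drop is_comp_take is_comp_rev less(2))
        then show ?thesis by simp
      qed
      also have "\<dots> = (-1) ^ n * T n"
      proof (cases c)
        case Nil
        have "T i = 0" if "i < n" for i
          using that Nil unfolding T_def n_def by (simp add: TT_Nil_c)
        moreover have "T n = 0" unfolding T_def n_def using False Nil by (simp add: TT_Nil_c)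
        ultimately show ?thesis by simp
      next
        case (Cons c1 c')
        define u where "u i = T1 (rev (take i a)) (drop i a) c1 c'" for i
        have Ti: "T i = u i + u (Suc i)" if "i < n" for i
        proof -
          have d: "drop i a = a ! i # drop (Suc i) a" using that unfolding n_def by (simp add: Cons_nth_drop_Suc)
          have r: "rev (take (Suc i) a) = a ! i # rev (take i a)" using that unfolding n_def by (simp add: take_Suc_conv_app_nth)
          have "T i = u i + T23 (rev (take i a)) (drop i a) c1 c'"
            unfolding T_def u_def Cons by (rule TT_split)
          also have "T23 (rev (take i a)) (drop i a) c1 c' = u (Suc i)"
            unfolding u_def r d T1_Cons by simp
          finally show ?thesis .
        qed
        have Tn: "T n = u n" unfolding T_def u_def n_def Cons by (simp add: TT_split T23_Nil)
        have u0: "u 0 = 0" unfolding u_def by (simp add: T1_Nil)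
        have "(\<Sum>i<n. (-1) ^ i * T i) = (\<Sum>i<n. (-1) ^ i * (u i + u (Suc i)))"
          by (rule sum.cong) (simp_all add: Ti)
        also have "\<dots> = - ((-1) ^ n * u n)" using u0 by (simp add: telescope)
        finally show ?thesis using Tn by simp
      qed
      also have "\<dots> = (-1) ^ length a * TT (rev a) [] c"
        unfolding T_def n_def by simp
      finally show "antM a c = (-1) ^ length a * TT (rev a) [] c" .
    qed
  qed
qed



lemma sum_list_concat': "sum_list (concat xs) = sum_list (map sum_list (xs :: nat list list))"
  by (induction xs) auto

lemma comp_pos_sum: "is_comp xs \<Longrightarrow> xs \<noteq> [] \<Longrightarrow> 0 < sum_list xs"
  by (cases xs) (auto simp: is_comp_def)

lemma psum_split: "i \<le> j \<Longrightarrow> sum_list (take j a) = sum_list (take i a) + sum_list (take (j - i) (drop i (a :: nat list)))"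
proof -
  assume "i \<le> j"
  then have "take j a = take i a @ take (j - i) (drop i a)"
    by (metis le_add_diff_inverse take_add)
  then show ?thesis by simp
qed

lemma psum_strict:
  assumes "is_comp a" "i < j" "j \<le> length a"
  shows "sum_list (take i a) < sum_list (take j a)"
proof -
  have "take (j - i) (drop i a) \<noteq> []" using assms by auto
  moreover have "is_comp (take (j - i) (drop i a))" using assms(1) by (simp add: is_comp_take is_comp_drop)
  ultimately have "0 < sum_list (take (j - i) (drop i a))" by (rule comp_pos_sum[rotated])
  then show ?thesis using psum_split[of i j a] assms(2) by simp
qed

lemma psum_mono_iff:
  assumes "is_comp a" "i \<le> length a" "j \<le> length a"
  shows "sum_list (take i a) \<le> sum_list (take j a) \<longleftrightarrow> i \<le> j"
  using psum_strict[OF assms(1)] assms by (metis le_less not_le)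

lemma psum_inj: "is_comp a \<Longrightarrow> inj_on (\<lambda>k. sum_list (take k a)) {..length a}"
  unfolding inj_on_def using psum_mono_iff by (metis atMost_iff order_antisym order_refl)

definition cutsP :: "'a list list \<Rightarrow> nat set" where
  "cutsP P = {length (concat (take i P)) | i. 0 < i \<and> i < length P}"

lemma concat_take_prefix: "take (length (concat (take i P))) (concat P) = concat (take i P)"
proof -
  have "concat P = concat (take i P) @ concat (drop i P)"
    by (metis append_take_drop_id concat_append)
  then show ?thesis by (metis append_eq_conv_conj)
qed

lemma psums_bsums: "psums (bsums P) = (\<lambda>k. sum_list (take k (concat P))) ` cutsP P"
proof -
  have e: "sum_list (take i (bsums P)) = sum_list (take (length (concat (take i P))) (concat P))" for i
    by (simp add: take_map concat_take_prefix sum_list_concat')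
  show ?thesis unfolding psums_def cutsP_def by (auto simp: e)
qed

lemma cutsP_range:
  assumes "[] \<notin> set P"
  shows "cutsP P \<subseteq> {k. 0 < k \<and> k < length (concat P)}"
proof
  fix k assume "k \<in> cutsP P"
  then obtain i where i: "0 < i" "i < length P" "k = length (concat (take i P))"
    unfolding cutsP_def by auto
  have "P ! 0 \<in> set (take i P)" using i by (simp add: in_set_conv_nth) (metis i(1) i(2) min.absorb4 nth_take)
  then have "P ! 0 \<noteq> []" using assms i by (metis in_set_takeD)
  moreover have "P ! 0 \<in> set (take i P)" by fact
  ultimately have k0: "0 < k" using i(3) by (metis concat_eq_Nil_conv length_greater_0_conv)
  have "P ! i \<in> set (drop i P)" using i by (metis Cons_nth_drop_Suc list.set_intros(1))
  then have "P ! i \<noteq> []" using assms by (metis in_set_dropD)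
  then have "concat (drop i P) \<noteq> []" using \<open>P ! i \<in> set (drop i P)\<close> by auto
  moreover have "concat P = concat (take i P) @ concat (drop i P)"
    by (metis append_take_drop_id concat_append)
  ultimately have "k < length (concat P)" using i(3) by simp
  then show "k \<in> {k. 0 < k \<and> k < length (concat P)}" using k0 by simp
qed

lemma sum_bsums: "sum_list (bsums P) = sum_list (concat P)"
  by (simp add: sum_list_concat')

lemma C1_if:
  assumes "is_comp a" "P \<in> set (lparts a)"
  shows "qleq (bsums P) a"
proof -
  have P: "concat P = a" "[] \<notin> set P" using lparts_sound[OF assms(2)] by auto
  have "psums (bsums P) \<subseteq> psums a"
  proof -
    have "psums (bsums P) = (\<lambda>k. sum_list (take k a)) ` cutsP P" using psums_bsums P(1) by simp
    also have "\<dots> \<subseteq> (\<lambda>k. sum_list (take k a)) ` {k. 0 < k \<and> k < length a}"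
      using cutsP_range[OF P(2)] P(1) by auto
    also have "\<dots> = psums a" unfolding psums_def by auto
    finally show ?thesis .
  qed
  then show ?thesis unfolding qleq_def using assms(1) comp_sums[OF assms(1) P] sum_bsums[of P] P(1) by simp
qed

lemma C1_only:
  assumes "qleq d a"
  shows "\<exists>P\<in>set (lparts a). d = bsums P"
  using assms
proof (induction d arbitrary: a)
  case Nil
  then have "is_comp a" "sum_list a = 0" unfolding qleq_def by auto
  then have "a = []" using comp_pos_sum[of a] by (metis less_irrefl)
  then show ?case by simp
next
  case (Cons d1 d')
  have qa: "is_comp a" "is_comp (d1 # d')" "sum_list (d1 # d') = sum_list a" "psums (d1 # d') \<subseteq> psums a"
    using Cons.prems unfolding qleq_def by auto
  have d1: "0 < d1" using qa(2) by (simp add: is_comp_def)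
  show ?case
  proof (cases "d' = []")
    case True
    then have "sum_list a = d1" using qa by simp
    then have "a \<noteq> []" using d1 by auto
    then have "[a] \<in> set (lparts a)" by (simp add: lparts_set)
    then show ?thesis using True \<open>sum_list a = d1\<close> by force
  next
    case False
    have "d1 \<in> psums (d1 # d')" unfolding psums_def using False
      by (auto intro!: exI[of _ 1])
    then obtain k where k: "0 < k" "k < length a" "d1 = sum_list (take k a)"
      using qa(4) unfolding psums_def by auto
    define a' where "a' = drop k a"
    have sa: "sum_list a = sum_list (take k a) + sum_list a'"
      unfolding a'_def by (metis append_take_drop_id sum_list_append)
    have "qleq d' a'"
      unfolding qleq_def
    proof (intro conjI)
      show "is_comp a'" unfolding a'_def using qa(1) by (rule is_comp_drop)
      show "is_comp d'" using qa(2) by (simp add: is_comp_def)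
      show "sum_list d' = sum_list a'" using qa(3) sa k(3) by simp
      show "psums d' \<subseteq> psums a'"
      proof
        fix x assume "x \<in> psums d'"
        then obtain i where i: "0 < i" "i < length d'" "x = sum_list (take i d')"
          unfolding psums_def by auto
        have "d1 + x \<in> psums (d1 # d')"
          unfolding psums_def using i by (auto intro!: exI[of _ "Suc i"])
        then obtain j where j: "0 < j" "j < length a" "d1 + x = sum_list (take j a)"
          using qa(4) unfolding psums_def by auto
        have "is_comp (take i d')" using qa(2) by (simp add: is_comp_def) (meson in_set_takeD)
        moreover have "take i d' \<noteq> []" using i by (cases d') auto
        ultimately have "0 < x" using i(3) comp_pos_sum by blast
        then have "sum_list (take k a) < sum_list (take j a)" using j k by simp
        then have kj: "k < j" using psum_mono_iff[OF qa(1), of j k] j k by linarith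
        have "sum_list (take j a) = sum_list (take k a) + sum_list (take (j - k) a')"
          unfolding a'_def using psum_split[of k j a] kj by simp
        then have "x = sum_list (take (j - k) a')" using j k by simp
        moreover have "0 < j - k" "j - k < length a'" using kj j unfolding a'_def by auto
        ultimately show "x \<in> psums a'" unfolding psums_def by auto
      qed
    qed
    then obtain P' where P': "P' \<in> set (lparts a')" "d' = bsums P'" using Cons.IH by blast
    have "concat (take k a # P') = a" using lparts_sound[OF P'(1)] unfolding a'_def by simp
    moreover have "[] \<notin> set (take k a # P')" using lparts_sound[OF P'(1)] k by auto
    ultimately have "take k a # P' \<in> set (lparts a)" by (simp add: lparts_set)
    moreover have "d1 # d' = bsums (take k a # P')" using P'(2) k(3) by simp
    ultimately show ?thesis by (metis (no_types))
  qed
qed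



lemma bsums_inj:
  assumes "is_comp (concat P)" "[] \<notin> set P" "[] \<notin> set P'" "concat P = concat P'" "bsums P = bsums P'"
  shows "P = P'"
  using assms
proof (induction P arbitrary: P')
  case Nil then show ?case by simp
next
  case (Cons B R)
  obtain B' R' where P': "P' = B' # R'" using Cons.prems(5) by (cases P') auto
  have sB: "sum_list B = sum_list B'" using Cons.prems(5) P' by simp
  have eq: "B @ concat R = B' @ concat R'" using Cons.prems(4) P' by simp
  have cB: "is_comp B" "is_comp B'"
  proof -
    show "is_comp B" using Cons.prems(1) by (simp add: is_comp_def)
    have "set B' \<subseteq> set (concat (B # R))" using Cons.prems(4) P' by auto
    then show "is_comp B'" using Cons.prems(1) by (auto simp: is_comp_def)
  qed
  have BB: "B = B'"
  proof -
    obtain us where "(B = B' @ us \<and> us @ concat R = concat R') \<or> (B @ us = B' \<and> concat R = us @ concat R')"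
      using eq by (auto simp: append_eq_append_conv2)
    then show ?thesis
    proof
      assume h: "B = B' @ us \<and> us @ concat R = concat R'"
      then have "sum_list B = sum_list B' + sum_list us" by auto
      then have "sum_list us = 0" using sB by linarith
      moreover have "is_comp us" using cB(1) h by (simp add: is_comp_def)
      ultimately have "us = []" using comp_pos_sum by (metis less_irrefl)
      then show ?thesis using h by simp
    next
      assume h: "B @ us = B' \<and> concat R = us @ concat R'"
      then have "sum_list B' = sum_list B + sum_list us" by auto
      then have "sum_list us = 0" using sB by linarith
      moreover have "is_comp us" using cB(2) h by (auto simp: is_comp_def)
      ultimately have "us = []" using comp_pos_sum by (metis less_irrefl)
      then show ?thesis using h by simp
    qed
  qed
  have "R = R'"
  proof (rule Cons.IH)
    show "is_comp (concat R)" using Cons.prems(1) by (simp add: is_comp_def)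
    show "[] \<notin> set R" using Cons.prems(2) by simp
    show "[] \<notin> set R'" using Cons.prems(3) P' by simp
    show "concat R = concat R'" using eq BB by simp
    show "bsums R = bsums R'" using Cons.prems(5) P' by simp
  qed
  then show ?case using BB P' by simp
qed

lemma blk_bsums:
  assumes "is_comp (concat P)" "[] \<notin> set P"
  shows "blk (concat P) (bsums P) = P"
  using assms
proof (induction P)
  case Nil then show ?case by simp
next
  case (Cons B R)
  define a where "a = B @ concat R"
  have ca: "is_comp a" using Cons.prems(1) unfolding a_def by simp
  have k: "(LEAST k. sum_list (take k a) = sum_list B) = length B"
  proof (rule Least_equality)
    show "sum_list (take (length B) a) = sum_list B" unfolding a_def by simp
  next
    fix k assume h: "sum_list (take k a) = sum_list B"
    show "length B \<le> k"
    proof (rule ccontr)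
      assume "\<not> length B \<le> k"
      then have "sum_list (take k a) < sum_list (take (length B) a)"
        using psum_strict[OF ca, of k "length B"] unfolding a_def by simp
      then show False using h unfolding a_def by simp
    qed
  qed
  have "blk (concat (B # R)) (bsums (B # R)) = take (length B) a # blk (drop (length B) a) (bsums R)"
    using k unfolding a_def by (simp add: Let_def)
  also have "\<dots> = B # blk (concat R) (bsums R)" unfolding a_def by simp
  also have "blk (concat R) (bsums R) = R"
  proof (rule Cons.IH)
    show "is_comp (concat R)" using Cons.prems(1) by (simp add: is_comp_def)
    show "[] \<notin> set R" using Cons.prems(2) by simp
  qed
  finally show ?case .
qed

lemma OtE_sub: "OtE a \<subseteq> {k. 0 < k \<and> k < length a}"
  unfolding OtE_def by auto

lemma OtE_empty_iff: "(OtE B = {}) = adjfree OEp B"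
proof
  assume h: "OtE B = {}"
  show "adjfree OEp B" unfolding adjfree_def
  proof (intro allI impI)
    fix i assume "Suc i < length B"
    then have "Suc i \<notin> OtE B \<Longrightarrow> \<not> OEp (B ! i) (B ! Suc i)" unfolding OtE_def OEp_def by auto
    then show "\<not> OEp (B ! i) (B ! Suc i)" using h by blast
  qed
next
  assume h: "adjfree OEp B"
  show "OtE B = {}"
  proof (rule ccontr)
    assume "OtE B \<noteq> {}"
    then obtain i where i: "1 \<le> i" "i < length B" "odd (B ! (i - 1))" "even (B ! i)" unfolding OtE_def by auto
    then obtain j where j: "i = Suc j" by (cases i) auto
    then show False using h i unfolding adjfree_def OEp_def by auto
  qed
qed

lemma cutsP_single: "cutsP [B] = {}"
  unfolding cutsP_def by auto

lemma cutsP_Cons: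
  assumes "R \<noteq> []"
  shows "cutsP (B # R) = insert (length B) ((+) (length B) ` cutsP R)"
proof
  show "cutsP (B # R) \<subseteq> insert (length B) ((+) (length B) ` cutsP R)"
  proof
    fix k assume "k \<in> cutsP (B # R)"
    then obtain i where i: "0 < i" "i < Suc (length R)" "k = length (concat (take i (B # R)))"
      unfolding cutsP_def by auto
    show "k \<in> insert (length B) ((+) (length B) ` cutsP R)"
    proof (cases "i = 1")
      case True then show ?thesis using i by simp
    next
      case False
      then obtain j where j: "i = Suc j" "0 < j" using i by (cases i) auto
      then have "k = length B + length (concat (take j R))" using i by simp
      moreover have "length (concat (take j R)) \<in> cutsP R" unfolding cutsP_def using i j by auto
      ultimately show ?thesis by blast
    qed
  qed
next
  show "insert (length B) ((+) (length B) ` cutsP R) \<subseteq> cutsP (B # R)"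
  proof
    fix k assume "k \<in> insert (length B) ((+) (length B) ` cutsP R)"
    then consider "k = length B" | j where "0 < j" "j < length R" "k = length B + length (concat (take j R))"
      unfolding cutsP_def by auto
    then show "k \<in> cutsP (B # R)"
    proof cases
      case 1
      then show ?thesis unfolding cutsP_def using assms by (auto intro!: exI[of _ 1])
    next
      case 2
      then show ?thesis unfolding cutsP_def by (auto intro!: exI[of _ "Suc j"])
    qed
  qed
qed

lemma OtE_append_lo: "i < length B \<Longrightarrow> (i \<in> OtE (B @ C)) = (i \<in> OtE B)"
  unfolding OtE_def by (auto simp: nth_append)

lemma OtE_append_hi: "length B < i \<Longrightarrow> (i \<in> OtE (B @ C)) = (i - length B \<in> OtE C)"
  unfolding OtE_def by (auto simp: nth_append Suc_diff_Suc)

lemma C4core: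
  assumes "[] \<notin> set P"
  shows "(OtE (concat P) \<subseteq> cutsP P) = (\<forall>B\<in>set P. OtE B = {})"
  using assms
proof (induction P)
  case Nil then show ?case by (simp add: OtE_def)
next
  case (Cons B R)
  show ?case
  proof (cases "R = []")
    case True then show ?thesis by (simp add: cutsP_single)
  next
    case False
    define L where "L = length B"
    have cuts: "cutsP (B # R) = insert L ((+) L ` cutsP R)" unfolding L_def by (rule cutsP_Cons[OF False])
    have IH: "(OtE (concat R) \<subseteq> cutsP R) = (\<forall>B\<in>set R. OtE B = {})" using Cons by simp
    have "(OtE (B @ concat R) \<subseteq> insert L ((+) L ` cutsP R)) = (OtE B = {} \<and> OtE (concat R) \<subseteq> cutsP R)"
    proof
      assume h: "OtE (B @ concat R) \<subseteq> insert L ((+) L ` cutsP R)"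
      have "OtE B = {}"
      proof (rule ccontr)
        assume "OtE B \<noteq> {}"
        then obtain i where i: "i \<in> OtE B" by auto
        then have "i < L" using OtE_sub unfolding L_def by auto
        then have "i \<in> OtE (B @ concat R)" using OtE_append_lo i unfolding L_def by blast
        then have "i \<in> insert L ((+) L ` cutsP R)" using h by blast
        then show False using \<open>i < L\<close> by auto
      qed
      moreover have "OtE (concat R) \<subseteq> cutsP R"
      proof
        fix j assume j: "j \<in> OtE (concat R)"
        then have "0 < j" using OtE_sub by auto
        then have "L + j \<in> OtE (B @ concat R)" using OtE_append_hi[of B "L + j" "concat R"] j unfolding L_def by simp
        then have "L + j \<in> insert L ((+) L ` cutsP R)" using h by blast
        then show "j \<in> cutsP R" using \<open>0 < j\<close> by auto
      qed
      ultimately show "OtE B = {} \<and> OtE (concat R) \<subseteq> cutsP R" by blast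
    next
      assume h: "OtE B = {} \<and> OtE (concat R) \<subseteq> cutsP R"
      show "OtE (B @ concat R) \<subseteq> insert L ((+) L ` cutsP R)"
      proof
        fix i assume i: "i \<in> OtE (B @ concat R)"
        consider "i < L" | "i = L" | "L < i" by linarith
        then show "i \<in> insert L ((+) L ` cutsP R)"
        proof cases
          case 1
          then have "i \<in> OtE B" using OtE_append_lo i unfolding L_def by blast
          then show ?thesis using h by blast
        next
          case 2 then show ?thesis by simp
        next
          case 3
          then have "i - L \<in> OtE (concat R)" using OtE_append_hi i unfolding L_def by blast
          then have "i - L \<in> cutsP R" using h by blast
          moreover have "i = L + (i - L)" using 3 by simp
          ultimately show ?thesis by blast
        qed
      qed
    qed
    then show ?thesis using cuts IH by simp
  qed
qed



lemma inj_image_subset_iff: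
  assumes "inj_on f C" "A \<subseteq> C" "B \<subseteq> C"
  shows "(f ` A \<subseteq> f ` B) = (A \<subseteq> B)"
proof
  assume h: "f ` A \<subseteq> f ` B"
  show "A \<subseteq> B"
  proof
    fix x assume "x \<in> A"
    then have "f x \<in> f ` B" using h by blast
    then show "x \<in> B" using inj_on_image_mem_iff[OF assms(1) _ assms(3)] \<open>x \<in> A\<close> assms(2) by blast
  qed
qed blast

lemma m_o_props:
  assumes "is_comp a"
  shows "is_comp (m_o a) \<and> sum_list (m_o a) = sum_list a \<and> psums (m_o a) = (\<lambda>k. sum_list (take k a)) ` OtE a"
proof (cases "a = []")
  case True
  then show ?thesis by (simp add: m_o_def is_comp_def psums_def OtE_def)
next
  case False
  define n where "n = length a"
  define ks where "ks = sorted_list_of_set (OtE a)"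
  define C where "C = 0 # ks @ [n]"
  define m where "m = length ks + 1"
  have mo: "m_o a = map (\<lambda>j. sum_list (take (C ! (j + 1) - C ! j) (drop (C ! j) a))) [0..<m]"
    unfolding m_o_def Let_def C_def ks_def m_def n_def using False by simp
  have n0: "0 < n" using False unfolding n_def by simp
  have fin: "finite (OtE a)"
    using OtE_sub[of a] by (rule finite_subset) (auto intro: finite_subset[of _ "{..<length a}"])
  have sk: "set ks = OtE a" unfolding ks_def using fin by simp
  have strict: "sorted_wrt (<) ks" unfolding ks_def by (rule strict_sorted_list_of_set)
  have ksr: "\<forall>x\<in>set ks. 0 < x \<and> x < n" using sk OtE_sub[of a] unfolding n_def by auto
  have sC: "sorted_wrt (<) C"
    unfolding C_def using strict ksr n0 by (auto simp: sorted_wrt_append)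
  have lenC: "length C = m + 1" unfolding C_def m_def by simp
  have C0: "C ! 0 = 0" unfolding C_def by simp
  have Cm: "C ! m = n" unfolding C_def m_def by (simp add: nth_append)
  have Cmid: "C ! j = ks ! (j - 1)" if "0 < j" "j < m" for j
    using that unfolding C_def m_def by (cases j) (auto simp: nth_append)
  have Clt: "C ! j < C ! Suc j" if "j < m" for j
    using sorted_wrt_nth_less[OF sC, of j "Suc j"] that lenC by simp
  have Cle: "C ! j \<le> n" if "j \<le> m" for j
  proof (cases "j = m")
    case True then show ?thesis using Cm by simp
  next
    case False
    then have "C ! j < C ! m" using sorted_wrt_nth_less[OF sC, of j m] that lenC by simp
    then show ?thesis using Cm by simp
  qed
  have lmo: "length (m_o a) = m" using mo by simp
  have nth_mo: "m_o a ! j = sum_list (take (C ! Suc j - C ! j) (drop (C ! j) a))" if "j < m" for j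
    using that mo by simp
  have ps: "sum_list (take j (m_o a)) = sum_list (take (C ! j) a)" if "j \<le> m" for j
    using that
  proof (induction j)
    case 0 then show ?case using C0 by simp
  next
    case (Suc j)
    then have jm: "j < m" by simp
    have "take (Suc j) (m_o a) = take j (m_o a) @ [m_o a ! j]"
      using jm lmo by (simp add: take_Suc_conv_app_nth)
    then have "sum_list (take (Suc j) (m_o a)) = sum_list (take (C ! j) a) + sum_list (take (C ! Suc j - C ! j) (drop (C ! j) a))"
      using Suc.IH jm nth_mo[OF jm] by simp
    also have "\<dots> = sum_list (take (C ! Suc j) a)"
      using psum_split[of "C ! j" "C ! Suc j" a] Clt[OF jm] by simp
    finally show ?case .
  qed
  have comp: "is_comp (m_o a)"
    unfolding is_comp_def
  proof
    fix x assume "x \<in> set (m_o a)"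
    then obtain j where j: "j < m" "x = m_o a ! j" using lmo by (auto simp: in_set_conv_nth)
    have "C ! j < n" using Clt[OF j(1)] Cle[of "Suc j"] j(1) by simp
    then have "take (C ! Suc j - C ! j) (drop (C ! j) a) \<noteq> []" using Clt[OF j(1)] unfolding n_def by simp
    moreover have "is_comp (take (C ! Suc j - C ! j) (drop (C ! j) a))"
      using assms by (simp add: is_comp_take is_comp_drop)
    ultimately have "0 < sum_list (take (C ! Suc j - C ! j) (drop (C ! j) a))"
      using comp_pos_sum by blast
    then show "0 < x" using j nth_mo by simp
  qed
  have sum: "sum_list (m_o a) = sum_list a"
    using ps[of m] lmo Cm unfolding n_def by simp
  have "psums (m_o a) = {sum_list (take (C ! j) a) |j. 0 < j \<and> j < m}"
    unfolding psums_def lmo using ps by (metis (lifting) less_imp_le)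
  also have "\<dots> = (\<lambda>k. sum_list (take k a)) ` set ks"
  proof
    show "{sum_list (take (C ! j) a) |j. 0 < j \<and> j < m} \<subseteq> (\<lambda>k. sum_list (take k a)) ` set ks"
    proof
      fix x assume "x \<in> {sum_list (take (C ! j) a) |j. 0 < j \<and> j < m}"
      then obtain j where j: "0 < j" "j < m" "x = sum_list (take (C ! j) a)" by auto
      then have "C ! j \<in> set ks" using Cmid[OF j(1,2)] unfolding m_def by simp
      then show "x \<in> (\<lambda>k. sum_list (take k a)) ` set ks" using j(3) by blast
    qed
  next
    show "(\<lambda>k. sum_list (take k a)) ` set ks \<subseteq> {sum_list (take (C ! j) a) |j. 0 < j \<and> j < m}"
    proof
      fix x assume "x \<in> (\<lambda>k. sum_list (take k a)) ` set ks"
      then obtain i where i: "i < length ks" "x = sum_list (take (ks ! i) a)" by (auto simp: in_set_conv_nth)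
      have "C ! Suc i = ks ! i" using Cmid[of "Suc i"] i(1) unfolding m_def by simp
      then show "x \<in> {sum_list (take (C ! j) a) |j. 0 < j \<and> j < m}"
        using i unfolding m_def by (auto intro!: exI[of _ "Suc i"])
    qed
  qed
  finally show ?thesis using comp sum sk by simp
qed

lemma C4:
  assumes "is_comp a" "P \<in> set (lparts a)"
  shows "qleq (m_o a) (bsums P) = (\<forall>B\<in>set P. OtE B = {})"
proof -
  have P: "concat P = a" "[] \<notin> set P" using lparts_sound[OF assms(2)] by auto
  have mp: "is_comp (m_o a)" "sum_list (m_o a) = sum_list a" "psums (m_o a) = (\<lambda>k. sum_list (take k a)) ` OtE a"
    using m_o_props[OF assms(1)] by auto
  have cb: "is_comp (bsums P)" using comp_sums[OF assms(1) P] .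
  have sb: "sum_list (bsums P) = sum_list a" using sum_bsums[of P] P(1) by simp
  have pb: "psums (bsums P) = (\<lambda>k. sum_list (take k a)) ` cutsP P" using psums_bsums[of P] P(1) by simp
  have "qleq (m_o a) (bsums P) = ((\<lambda>k. sum_list (take k a)) ` OtE a \<subseteq> (\<lambda>k. sum_list (take k a)) ` cutsP P)"
    unfolding qleq_def using mp cb sb pb by simp
  also have "\<dots> = (OtE a \<subseteq> cutsP P)"
  proof (rule inj_image_subset_iff[OF psum_inj[OF assms(1)]])
    show "OtE a \<subseteq> {..length a}" using OtE_sub by fastforce
    show "cutsP P \<subseteq> {..length a}" using cutsP_range[OF P(2)] P(1) by fastforce
  qed
  also have "\<dots> = (\<forall>B\<in>set P. OtE B = {})" using C4core[OF P(2)] P(1) by simp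
  finally show ?thesis .
qed

definition wt :: "nat list list \<Rightarrow> rat" where
  "wt P = prod_list (map wb P)"

lemma cc_wt: "cc a b = wt (blk a b)"
proof -
  have "(\<lambda>B. 1 / (of_nat (fact (length (filter odd B))) * of_nat (fact (length (filter even B))))) = wb"
    by (rule ext) (simp add: wb_def)
  then show ?thesis unfolding cc_def wt_def by simp
qed

lemma Sb_repr:
  assumes "is_comp a"
  shows "Sb a d = SP a (\<lambda>P. if (\<forall>B\<in>set P. OtE B = {}) \<and> d = bsums P then wt P else 0)"
proof (cases "\<exists>P\<in>set (lparts a). d = bsums P")
  case True
  then obtain P0 where P0: "P0 \<in> set (lparts a)" "d = bsums P0" by (elim bexE) simp
  have P0s: "concat P0 = a" "[] \<notin> set P0" using lparts_sound[OF P0(1)] by blast+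
  define F where "F = (\<lambda>P. if (\<forall>B\<in>set P. OtE B = {}) \<and> d = bsums P then wt P else 0)"
  have "SP a F = SP a (\<lambda>P. if P = P0 then F P0 else 0)"
  proof (rule SP_cong)
    fix P assume P: "concat P = a" "[] \<notin> set P"
    show "F P = (if P = P0 then F P0 else 0)"
    proof (cases "P = P0")
      case False
      have "d \<noteq> bsums P"
      proof
        assume dP: "d = bsums P"
        have "P = P0"
        proof (rule bsums_inj)
          show "is_comp (concat P)" using P(1) assms by simp
          show "[] \<notin> set P" by (rule P(2))
          show "[] \<notin> set P0" by (rule P0s(2))
          show "concat P = concat P0" using P(1) P0s(1) by simp
          show "bsums P = bsums P0" using dP P0(2) by (rule trans[OF sym])
        qed
        then show False using False by simp
      qed
      then show ?thesis using False unfolding F_def by simp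
    qed simp
  qed
  also have "\<dots> = F P0"
    unfolding SP_sum_set lparts_set[symmetric] using P0(1) by simp
  also have "F P0 = (if (\<forall>B\<in>set P0. OtE B = {}) then wt P0 else 0)" unfolding F_def using P0(2) by simp
  also have "\<dots> = Sb a d"
  proof -
    have "qleq d a" using C1_if[OF assms P0(1)] P0(2) by simp
    moreover have "qleq (m_o a) d = (\<forall>B\<in>set P0. OtE B = {})" using C4[OF assms P0(1)] P0(2) by simp
    moreover have "cc a d = wt P0" using cc_wt blk_bsums[of P0] P0s P0(2) assms by simp
    ultimately show ?thesis unfolding Sb_def by simp
  qed
  finally show ?thesis unfolding F_def by simp
next
  case False
  then have "\<not> qleq d a" using C1_only by metis
  then have "Sb a d = 0" unfolding Sb_def by simp
  moreover have "SP a (\<lambda>P. if (\<forall>B\<in>set P. OtE B = {}) \<and> d = bsums P then wt P else 0) = 0"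
    by (rule SP_zero) (use False lparts_set in auto)
  ultimately show ?thesis by simp
qed



lemma TT_Nil_zero:
  assumes "sum_list c \<noteq> sum_list r"
  shows "TT r [] c = 0"
  unfolding TT_def
proof (rule SP_zero)
  fix Q :: "nat list list" assume Q: "concat Q = r" "[] \<notin> set Q"
  have "c \<noteq> bsums Q"
  proof
    assume "c = bsums Q"
    then have "sum_list c = sum_list r" using sum_bsums[of Q] Q(1) by simp
    then show False using assms by simp
  qed
  then show "Qc (bsums Q) [] c = 0" by (simp add: Qc_Nil_d)
qed

lemma finite_comps: "finite (comps n)"
proof -
  have "comps n \<subseteq> {a. is_comp a \<and> sum_list a \<le> n}" unfolding comps_def by auto
  then show ?thesis using finite_comps_le finite_subset by blast
qed

lemma Phi_eq: "Phi P = (if \<forall>B\<in>set P. adjfree EOp B then (-1) ^ length P * wt P else 0)"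
  by (induction P) (auto simp: Phi_def wt_def phi_def)

lemma g0_prod: "prod_list (map g0 R) = (if \<forall>B\<in>set R. adjfree OEp B then (-1) ^ length (concat R) * wt R else 0)"
  by (induction R) (auto simp: g0_def wt_def power_add)

lemma wb_rev: "wb (rev B) = wb B"
  by (simp add: wb_def rev_filter[symmetric])

lemma wt_revP: "wt (revP P) = wt P"
proof -
  have "wt (revP P) = prod_list (rev (map (wb \<circ> rev) P))" by (simp add: wt_def revP_def rev_map)
  also have "\<dots> = prod_list (map (wb \<circ> rev) P)" by (simp add: prod_list.rev)
  also have "\<dots> = wt P" unfolding wt_def by (simp add: o_def wb_rev)
  finally show ?thesis .
qed

lemma prod_list_concat_map: "prod_list (map f (concat xs)) = prod_list (map (\<lambda>x. prod_list (map f x)) xs)"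
  by (induction xs) auto

theorem mainTheorem2:
  fixes a :: "nat list"
  assumes "is_comp a"
  shows "antipode (Sb a) = (\<lambda>c. (-1) ^ length a * Sb (rev a) c)"
proof (rule ext)
  fix c :: "nat list"
  define n where "n = sum_list c"
  define okO where "okO = (\<lambda>P :: nat list list. \<forall>B\<in>set P. OtE B = {})"
  define H where "H = (\<lambda>R :: nat list list. if c = bsums R then (1::rat) else 0)"
  have "antipode (Sb a) c = (\<Sum>d\<in>comps n. Sb a d * antM d c)"
    unfolding antipode_def n_def ..
  also have "\<dots> = (\<Sum>d\<in>comps n. SP a (\<lambda>P. if d = bsums P then (if okO P then wt P * antM d c else 0) else 0))"
  proof (rule sum.cong)
    fix d
    have "Sb a d * antM d c = SP a (\<lambda>P. (if okO P \<and> d = bsums P then wt P else 0) * antM d c)"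
      unfolding Sb_repr[OF assms] okO_def SP_mult_right ..
    also have "\<dots> = SP a (\<lambda>P. if d = bsums P then (if okO P then wt P * antM d c else 0) else 0)"
      by (rule SP_cong) simp
    finally show "Sb a d * antM d c = SP a (\<lambda>P. if d = bsums P then (if okO P then wt P * antM d c else 0) else 0)" .
  qed simp
  also have "\<dots> = SP a (\<lambda>P. \<Sum>d\<in>comps n. if d = bsums P then (if okO P then wt P * antM d c else 0) else 0)"
    by (rule sum_SP_swap)
  also have "\<dots> = SP a (\<lambda>P. if okO P then wt P * ((-1) ^ length P * TT (rev (bsums P)) [] c) else 0)"
  proof (rule SP_cong)
    fix P assume P: "concat P = a" "[] \<notin> set P"
    have cb: "is_comp (bsums P)" using comp_sums[OF assms P] .
    have am: "antM (bsums P) c = (-1) ^ length P * TT (rev (bsums P)) [] c"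
      using antM_formula[OF cb] by simp
    have "(\<Sum>d\<in>comps n. if d = bsums P then (if okO P then wt P * antM d c else 0) else 0)
        = (if bsums P \<in> comps n then (if okO P then wt P * antM (bsums P) c else 0) else 0)"
      using finite_comps[of n] by simp
    also have "\<dots> = (if okO P then wt P * antM (bsums P) c else 0)"
    proof (cases "bsums P \<in> comps n")
      case False
      then have "sum_list c \<noteq> sum_list (rev (bsums P))" using cb unfolding comps_def n_def by auto
      then have "antM (bsums P) c = 0" using am TT_Nil_zero by simp
      then show ?thesis using False by simp
    qed simp
    finally show "(\<Sum>d\<in>comps n. if d = bsums P then (if okO P then wt P * antM d c else 0) else 0)
        = (if okO P then wt P * ((-1) ^ length P * TT (rev (bsums P)) [] c) else 0)"
      using am by simp
  qed
  also have "\<dots> = SP (rev a) (\<lambda>P. Phi P * TT (bsums P) [] c)"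
  proof -
    have "SP a (\<lambda>P. if okO P then wt P * ((-1) ^ length P * TT (rev (bsums P)) [] c) else 0)
      = SP (rev a) (\<lambda>P. if okO (revP P) then wt (revP P) * ((-1) ^ length (revP P) * TT (rev (bsums (revP P))) [] c) else 0)"
      using SP_rev[of "rev a"] by simp
    also have "\<dots> = SP (rev a) (\<lambda>P. Phi P * TT (bsums P) [] c)"
    proof (rule SP_cong)
      fix P :: "nat list list"
      have o: "okO (revP P) = (\<forall>B\<in>set P. adjfree EOp B)"
        unfolding okO_def revP_def by (simp add: OtE_empty_iff adjfree_rev OEp_flip)
      have l: "length (revP P) = length P" by (simp add: revP_def)
      have r: "rev (bsums (revP P)) = bsums P" by (simp add: revP_def rev_map o_def)
      show "(if okO (revP P) then wt (revP P) * ((-1) ^ length (revP P) * TT (rev (bsums (revP P))) [] c) else 0) =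
          Phi P * TT (bsums P) [] c"
        unfolding o l r wt_revP Phi_eq by simp
    qed
    finally show ?thesis .
  qed
  also have "\<dots> = SP (rev a) (\<lambda>P. SP P (\<lambda>QQ. H (map concat QQ) * prod_list (map Phi QQ)))"
  proof (rule SP_cong)
    fix P :: "nat list list"
    have "TT (bsums P) [] c = SP P (\<lambda>QQ. H (map concat QQ))"
    proof -
      have "TT (bsums P) [] c = SP P (\<lambda>QQ. if c = bsums (map (map sum_list) QQ) then 1 else 0)"
        unfolding TT_def SP_map by (simp add: Qc_Nil_d)
      also have "\<dots> = SP P (\<lambda>QQ. H (map concat QQ))"
        unfolding H_def by (simp add: o_def sum_list_concat')
      finally show ?thesis .
    qed
    then have "Phi P * TT (bsums P) [] c = SP P (\<lambda>QQ. Phi P * H (map concat QQ))"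
      by (simp add: SP_mult)
    also have "\<dots> = SP P (\<lambda>QQ. H (map concat QQ) * prod_list (map Phi QQ))"
    proof (rule SP_cong)
      fix QQ :: "nat list list list" assume "concat QQ = P"
      have "Phi (concat QQ) = prod_list (map Phi QQ)"
        unfolding Phi_def[abs_def] by (simp only: prod_list_concat_map)
      then have "Phi P = prod_list (map Phi QQ)" using \<open>concat QQ = P\<close> by simp
      then show "Phi P * H (map concat QQ) = H (map concat QQ) * prod_list (map Phi QQ)" by simp
    qed
    finally show "Phi P * TT (bsums P) [] c = SP P (\<lambda>QQ. H (map concat QQ) * prod_list (map Phi QQ))" .
  qed
  also have "\<dots> = SP (rev a) (\<lambda>R. PP R (\<lambda>QQ. H (map concat QQ) * prod_list (map Phi QQ)))"
    by (rule DPR)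
  also have "\<dots> = SP (rev a) (\<lambda>R. H R * prod_list (map g0 R))"
    by (simp add: PP_factor lemmaF)
  also have "\<dots> = (-1) ^ length a * SP (rev a) (\<lambda>R. if okO R \<and> c = bsums R then wt R else 0)"
    unfolding SP_mult[symmetric]
  proof (rule SP_cong)
    fix R :: "nat list list" assume R: "concat R = rev a" "[] \<notin> set R"
    have "length (concat R) = length a" using R by simp
    then show "H R * prod_list (map g0 R) = (-1) ^ length a * (if okO R \<and> c = bsums R then wt R else 0)"
      unfolding g0_prod H_def okO_def by (simp add: OtE_empty_iff)
  qed
  also have "\<dots> = (-1) ^ length a * Sb (rev a) c"
    unfolding okO_def using Sb_repr[of "rev a" c] assms by (simp add: is_comp_rev)
  finally show "antipode (Sb a) c = (-1) ^ length a * Sb (rev a) c" .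
qed


end
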